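(* Let $A=\{0,36,72,108,144\}\oplus\{0,100,200\}\oplus\{0,225\}\subseteq\mathbb{Z}$ (the set of all sums $a+b+c$ with $a\in\{0,36,72,108,144\}$, $b\in\{0,100,200\}$, $c\in\{0,225\}$) and let $\mathcal{T}_A=\mathbb{Z}+\frac{1}{900}A\subseteq\mathbb{R}$. Then $\mathcal{T}_A$ has the universal spectrum $\Lambda_A=900\mathbb{Z}+A$.
   Context: A measurable set $\Omega\subseteq\mathbb{R}$ of finite positive Lebesgue measure tiles $\mathbb{R}$ by translations with tiling set $\mathcal{T}$ if $\Omega+\mathcal{T}=\mathbb{R}$ and $(\Omega+t)\cap(\Omega+t')$ has Lebesgue measure zero for all distinct $t,t'\in\mathcal{T}$. Such an $\Omega$ is a spectral set with spectrum $\Lambda$ (a discrete subset of $\mathbb{R}$) if the functions $e^{2\pi i\lambda x}$, $\lambda\in\Lambda$, restricted to $\Omega$ form an orthogonal basis of $L^2(\Omega)$. A set $\Lambda$ is a universal spectrum for a tiling set $\mathcal{T}$ if every set $\Omega$ that tiles $\mathbb{R}$ by translations with tiling set $\mathcal{T}$ is a spectral set with spectrum $\Lambda$. *)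

theory Defs
  imports "HOL-Analysis.Analysis"
begin

definition tiles_with :: "real set \<Rightarrow> real set \<Rightarrow> bool" where
  "tiles_with \<Omega> T \<longleftrightarrow>
     \<Omega> \<in> sets lebesgue \<and> 0 < emeasure lebesgue \<Omega> \<and> emeasure lebesgue \<Omega> < \<infinity> \<and>
     (\<Union>t\<in>T. (\<lambda>x. x + t) ` \<Omega>) = UNIV \<and>
     (\<forall>t\<in>T. \<forall>t'\<in>T. t \<noteq> t' \<longrightarrow>
        ((\<lambda>x. x + t) ` \<Omega>) \<inter> ((\<lambda>x. x + t') ` \<Omega>) \<in> null_sets lebesgue)"

definition discrete_set :: "real set \<Rightarrow> bool" where
  "discrete_set \<Lambda> \<longleftrightarrow> (\<forall>x\<in>\<Lambda>. \<exists>e>0. \<forall>y\<in>\<Lambda>. dist y x < e \<longrightarrow> y = x)"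

definition expo :: "real \<Rightarrow> real \<Rightarrow> complex" where
  "expo l x = cis (2 * pi * l * x)"

definition L2_on :: "real set \<Rightarrow> (real \<Rightarrow> complex) \<Rightarrow> bool" where
  "L2_on \<Omega> f \<longleftrightarrow> set_borel_measurable lebesgue \<Omega> f \<and>
                    set_integrable lebesgue \<Omega> (\<lambda>x. (cmod (f x))\<^sup>2)"

definition L2_inner :: "real set \<Rightarrow> (real \<Rightarrow> complex) \<Rightarrow> (real \<Rightarrow> complex) \<Rightarrow> complex" where
  "L2_inner \<Omega> f g = (LINT x:\<Omega>|lebesgue. f x * cnj (g x))"

text \<open>Omega is spectral with spectrum Lambda: Lambda is discrete and the exponentials
  e_lambda, lambda in Lambda, restricted to Omega form an orthogonal basis of L^2(Omega),
  i.e. they are pairwise orthogonal and complete (the only element of L^2(Omega)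
  orthogonal to all of them is zero a.e. on Omega).\<close>
definition spectral_with :: "real set \<Rightarrow> real set \<Rightarrow> bool" where
  "spectral_with \<Omega> \<Lambda> \<longleftrightarrow>
     \<Omega> \<in> sets lebesgue \<and> 0 < emeasure lebesgue \<Omega> \<and> emeasure lebesgue \<Omega> < \<infinity> \<and>
     discrete_set \<Lambda> \<and>
     (\<forall>l\<in>\<Lambda>. \<forall>m\<in>\<Lambda>. l \<noteq> m \<longrightarrow> L2_inner \<Omega> (expo l) (expo m) = 0) \<and>
     (\<forall>f. L2_on \<Omega> f \<longrightarrow> (\<forall>l\<in>\<Lambda>. L2_inner \<Omega> f (expo l) = 0) \<longrightarrow>
          (AE x in lebesgue. x \<in> \<Omega> \<longrightarrow> f x = 0))"

definition universal_spectrum :: "real set \<Rightarrow> real set \<Rightarrow> bool" where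
  "universal_spectrum \<Lambda> T \<longleftrightarrow> (\<forall>\<Omega>. tiles_with \<Omega> T \<longrightarrow> spectral_with \<Omega> \<Lambda>)"

definition set_A :: "real set" where
  "set_A = {a + b + c | a b c. a \<in> {0, 36, 72, 108, 144} \<and> b \<in> {0, 100, 200} \<and> c \<in> {0, 225}}"

end

theory Submission
  imports Defs
begin

definition alpha :: "nat \<times> nat \<times> nat \<Rightarrow> int" where
  "alpha = (\<lambda>(i,j,l). 36 * int i + 100 * int j + 225 * int l)"
definition Idx :: "(nat \<times> nat \<times> nat) set" where
  "Idx = {..<5} \<times> {..<3} \<times> {..<2}"
definition AI :: "int set" where "AI = alpha ` Idx"
definition om :: "int \<Rightarrow> complex" where "om m = cis (2 * pi * real_of_int m / 900)"

lemma om_add: "om (m + n) = om m * om n"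
  by (simp add: om_def cis_mult add_divide_distrib distrib_left)

lemma om_900: "om (900 * k) = 1"
proof -
  have "2 * pi * real_of_int (900 * k) / 900 = 2 * pi * real_of_int k" by simp
  moreover have "cis (2 * pi * real_of_int k) = 1" by (rule cis_multiple_2pi) simp
  ultimately show ?thesis unfolding om_def by metis
qed

lemma om_mod: "om (m mod 900) = om m"
proof -
  have "m = m mod 900 + 900 * (m div 900)" by simp
  then have "om m = om (m mod 900) * om (900 * (m div 900))" by (metis om_add)
  then show ?thesis by (simp add: om_900)
qed

lemma om_eq_1: "om m = 1 \<longleftrightarrow> 900 dvd m"
proof
  assume "900 dvd m" then show "om m = 1" using om_900 by auto
next
  assume "om m = 1"
  then have "cis (2 * pi * real_of_int m / 900) = 1" by (simp add: om_def)
  then have "exp (\<i> * complex_of_real (2 * pi * real_of_int m / 900)) = 1" by (simp add: cis_conv_exp)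
  then obtain n :: int where "2 * pi * real_of_int m / 900 = of_int (2 * n) * pi"
    by (auto simp: exp_eq_1)
  then have "real_of_int m = 900 * of_int n" by (simp add: field_simps)
  then have "m = 900 * n" by linarith
  then show "900 dvd m" by simp
qed

lemma om_pow: "om m ^ k = om (int k * m)"
proof -
  have "cis (2 * pi * real_of_int m / 900) ^ k = cis (real k * (2 * pi * real_of_int m / 900))"
    by (rule Complex.DeMoivre)
  also have "real k * (2 * pi * real_of_int m / 900) = 2 * pi * real_of_int (int k * m) / 900"
    by simp
  finally show ?thesis unfolding om_def .
qed

lemma om_0 [simp]: "om 0 = 1" by (simp add: om_def)

lemma cnj_om: "cnj (om m) = om (- m)"
  by (simp add: om_def cis_cnj)

lemma small_dvd:
  fixes x y z :: int
  assumes "\<bar>x\<bar> \<le> 4" "\<bar>y\<bar> \<le> 2" "\<bar>z\<bar> \<le> 1"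
  shows "5 dvd (36*x+100*y+225*z) \<Longrightarrow> x = 0"
    and "3 dvd (36*x+100*y+225*z) \<Longrightarrow> y = 0"
    and "2 dvd (36*x+100*y+225*z) \<Longrightarrow> z = 0"
proof -
  assume h: "5 dvd (36*x+100*y+225*z)"
  have "x = (36*x+100*y+225*z) - 5*(7*x+20*y+45*z)" by simp
  then have "5 dvd x" using h by (metis dvd_diff dvd_triv_left)
  then obtain k where "x = 5 * k" by auto
  then show "x = 0" using assms(1) by presburger
next
  assume h: "3 dvd (36*x+100*y+225*z)"
  have "y = (36*x+100*y+225*z) - 3*(12*x+33*y+75*z)" by simp
  then have "3 dvd y" using h by (metis dvd_diff dvd_triv_left)
  then obtain k where "y = 3 * k" by auto
  then show "y = 0" using assms(2) by presburger
next
  assume h: "2 dvd (36*x+100*y+225*z)"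
  have "z = (36*x+100*y+225*z) - 2*(18*x+50*y+112*z)" by simp
  then have "2 dvd z" using h by (metis dvd_diff dvd_triv_left)
  then obtain k where "z = 2 * k" by auto
  then show "z = 0" using assms(3) by presburger
qed

lemma alpha_inj: "inj_on alpha Idx"
proof (rule inj_onI)
  fix p q assume "p \<in> Idx" "q \<in> Idx" and e0: "alpha p = alpha q"
  obtain i j l where p: "p = (i,j,l)" by (cases p) auto
  obtain i' j' l' where q: "q = (i',j',l')" by (cases q) auto
  have e: "alpha (i, j, l) = alpha (i', j', l')" using e0 p q by simp
  have b: "i < 5" "j < 3" "l < 2" "i' < 5" "j' < 3" "l' < 2" using \<open>p \<in> Idx\<close> \<open>q \<in> Idx\<close> p q by (auto simp: Idx_def)
  define x where "x = int i - int i'"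
  define y where "y = int j - int j'"
  define z where "z = int l - int l'"
  have bx: "\<bar>x\<bar> \<le> 4" "\<bar>y\<bar> \<le> 2" "\<bar>z\<bar> \<le> 1" using b by (auto simp: x_def y_def z_def)
  have d: "36*x+100*y+225*z = 0" using e by (simp add: alpha_def x_def y_def z_def algebra_simps)
  have "x = 0" "y = 0" "z = 0" using small_dvd[OF bx] d by auto
  then show "p = q" by (simp add: p q x_def y_def z_def)
qed

lemma AI_card: "card AI = 30"
  unfolding AI_def using alpha_inj by (simp add: card_image Idx_def card_cartesian_product)

lemma AI_finite: "finite AI" unfolding AI_def Idx_def by simp

lemma AI_bounds: "a \<in> AI \<Longrightarrow> 0 \<le> a \<and> a \<le> 569"
  unfolding AI_def Idx_def alpha_def by auto

lemma AI_0: "0 \<in> AI"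
  unfolding AI_def Idx_def alpha_def by (auto intro!: image_eqI[where x="(0,0,0)"])

lemma om_alpha: "om (x * alpha (i,j,l)) = om (36*x)^i * om (100*x)^j * om (225*x)^l"
  by (simp add: alpha_def om_pow om_add[symmetric] algebra_simps)

lemma Ahat_factor:
  "(\<Sum>a\<in>AI. om (x * a)) =
     (\<Sum>i<5. om (36*x)^i) * (\<Sum>j<3. om (100*x)^j) * (\<Sum>l<2. om (225*x)^l)"
proof -
  have e: "(\<Sum>j<3. \<Sum>l<2. om (100*x)^j * om (225*x)^l) = (\<Sum>j<3. om (100*x)^j) * (\<Sum>l<2. om (225*x)^l)"
    by (rule sum_product[symmetric])
  have "(\<Sum>a\<in>AI. om (x * a)) = (\<Sum>t\<in>Idx. om (x * alpha t))"
    unfolding AI_def using alpha_inj by (simp add: sum.reindex)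
  also have "\<dots> = (\<Sum>i<5. \<Sum>j<3. \<Sum>l<2. om (36*x)^i * om (100*x)^j * om (225*x)^l)"
    unfolding Idx_def sum.cartesian_product' om_alpha ..
  also have "\<dots> = (\<Sum>i<5. om (36*x)^i * (\<Sum>j<3. \<Sum>l<2. om (100*x)^j * om (225*x)^l))"
    by (simp only: sum_distrib_left mult.assoc)
  also have "\<dots> = (\<Sum>i<5. om (36*x)^i * ((\<Sum>j<3. om (100*x)^j) * (\<Sum>l<2. om (225*x)^l)))"
    by (simp only: e)
  also have "\<dots> = (\<Sum>i<5. om (36*x)^i) * (\<Sum>j<3. om (100*x)^j) * (\<Sum>l<2. om (225*x)^l)"
    by (simp only: sum_distrib_right mult.assoc)
  finally show ?thesis .
qed

lemma geom_nz:
  fixes z :: complex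
  assumes "m > 0" "z ^ m \<noteq> 1 \<or> z = 1"
  shows "(\<Sum>i<m. z^i) \<noteq> 0"
  using assms by (auto simp: sum_gp_strict)

lemma Ahat_nz:
  assumes "a \<in> AI" "a' \<in> AI"
  shows "(\<Sum>b\<in>AI. om ((a - a') * b)) \<noteq> 0"
proof -
  obtain i j l i' j' l' where a: "a = 36 * int i + 100 * int j + 225 * int l"
    and a': "a' = 36 * int i' + 100 * int j' + 225 * int l'"
    and b: "i < 5" "j < 3" "l < 2" "i' < 5" "j' < 3" "l' < 2"
    using assms unfolding AI_def Idx_def alpha_def by auto
  define d where "d = a - a'"
  define x where "x = int i - int i'"
  define y where "y = int j - int j'"
  define z where "z = int l - int l'"
  have bx: "\<bar>x\<bar> \<le> 4" "\<bar>y\<bar> \<le> 2" "\<bar>z\<bar> \<le> 1" using b by (auto simp: x_def y_def z_def)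
  have dd: "d = 36*x+100*y+225*z" by (simp add: d_def a a' x_def y_def z_def algebra_simps)
  have 1: "(\<Sum>i<5. om (36*d)^i) \<noteq> 0"
  proof (rule geom_nz)
    have "25 dvd d" if "5 dvd d"
    proof -
      have "x = 0" using small_dvd(1)[OF bx] that dd by simp
      then have "d = 25 * (4*y+9*z)" using dd by simp
      then show ?thesis by simp
    qed
    moreover have "5 dvd d" if h: "900 dvd (int 5 * (36 * d))"
    proof -
      obtain k where "int 5 * (36 * d) = 900 * k" using h by (elim dvdE) auto
      then have "d = 5 * k" by simp
      then show ?thesis by simp
    qed
    moreover have "900 dvd 36 * d" if h: "25 dvd d"
    proof -
      obtain k where "d = 25 * k" using h by (elim dvdE) auto
      then have "36 * d = 900 * k" by simp
      then show ?thesis by simp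
    qed
    ultimately show "om (36 * d) ^ 5 \<noteq> 1 \<or> om (36 * d) = 1"
      by (auto simp only: om_pow om_eq_1)
  qed simp
  have 2: "(\<Sum>i<3. om (100*d)^i) \<noteq> 0"
  proof (rule geom_nz)
    have "9 dvd d" if "3 dvd d"
    proof -
      have "y = 0" using small_dvd(2)[OF bx] that dd by simp
      then have "d = 9 * (4*x+25*z)" using dd by simp
      then show ?thesis by simp
    qed
    moreover have "3 dvd d" if h: "900 dvd (int 3 * (100 * d))"
    proof -
      obtain k where "int 3 * (100 * d) = 900 * k" using h by (elim dvdE) auto
      then have "d = 3 * k" by simp
      then show ?thesis by simp
    qed
    moreover have "900 dvd 100 * d" if h: "9 dvd d"
    proof -
      obtain k where "d = 9 * k" using h by (elim dvdE) auto
      then have "100 * d = 900 * k" by simp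
      then show ?thesis by simp
    qed
    ultimately show "om (100 * d) ^ 3 \<noteq> 1 \<or> om (100 * d) = 1"
      by (auto simp only: om_pow om_eq_1)
  qed simp
  have 3: "(\<Sum>i<2. om (225*d)^i) \<noteq> 0"
  proof (rule geom_nz)
    have "4 dvd d" if "2 dvd d"
    proof -
      have "z = 0" using small_dvd(3)[OF bx] that dd by simp
      then have "d = 4 * (9*x+25*y)" using dd by simp
      then show ?thesis by simp
    qed
    moreover have "2 dvd d" if h: "900 dvd (int 2 * (225 * d))"
    proof -
      obtain k where "int 2 * (225 * d) = 900 * k" using h by (elim dvdE) auto
      then have "d = 2 * k" by simp
      then show ?thesis by simp
    qed
    moreover have "900 dvd 225 * d" if h: "4 dvd d"
    proof -
      obtain k where "d = 4 * k" using h by (elim dvdE) auto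
      then have "225 * d = 900 * k" by simp
      then show ?thesis by simp
    qed
    ultimately show "om (225 * d) ^ 2 \<noteq> 1 \<or> om (225 * d) = 1"
      by (auto simp only: om_pow om_eq_1)
  qed simp
  show ?thesis using 1 2 3 unfolding d_def[symmetric] Ahat_factor by simp
qed

definition good :: "int set \<Rightarrow> bool" where
  "good S \<longleftrightarrow> (\<forall>m. \<exists>n\<in>S. \<exists>a\<in>AI. \<exists>j. m = n + a + 900 * j) \<and>
     (\<forall>n n' a a' j j'. n \<in> S \<longrightarrow> n' \<in> S \<longrightarrow> a \<in> AI \<longrightarrow> a' \<in> AI \<longrightarrow>
        n + a + 900 * j = n' + a' + 900 * j' \<longrightarrow> n = n' \<and> a = a')"

lemma good_inj_mod:
  assumes "good S" shows "inj_on (\<lambda>n. n mod 900) S"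
proof (rule inj_onI)
  fix n n' assume "n \<in> S" "n' \<in> S" "n mod 900 = n' mod 900"
  moreover have "n = 900 * (n div 900) + n mod 900" by simp
  moreover have "n' = 900 * (n' div 900) + n' mod 900" by simp
  ultimately have "n + 0 + 900 * (n' div 900) = n' + 0 + 900 * (n div 900)"
    by linarith
  then show "n = n'" using assms \<open>n \<in> S\<close> \<open>n' \<in> S\<close> AI_0 unfolding good_def by blast
qed

lemma good_finite: assumes "good S" shows "finite S"
proof -
  have "(\<lambda>n. n mod 900) ` S \<subseteq> {0..<900}" by auto
  then have "finite ((\<lambda>n. n mod 900) ` S)" by (rule finite_subset) simp
  then show ?thesis using good_inj_mod[OF assms] finite_image_iff by blast
qed

definition phi :: "int \<times> int \<Rightarrow> nat" where "phi p = nat ((fst p + snd p) mod 900)"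

lemma good_bij:
  assumes "good S" shows "bij_betw phi (S \<times> AI) {..<900}"
proof (rule bij_betwI')
  fix p q assume p: "p \<in> S \<times> AI" and q: "q \<in> S \<times> AI"
  show "(phi p = phi q) = (p = q)"
  proof
    assume e: "phi p = phi q"
    obtain n a where pn: "p = (n, a)" by (cases p)
    obtain n' a' where qn: "q = (n', a')" by (cases q)
    have "(n + a) mod 900 = (n' + a') mod 900"
      using e unfolding phi_def pn qn by simp
    moreover have "n + a = 900 * ((n + a) div 900) + (n + a) mod 900" by simp
    moreover have "n' + a' = 900 * ((n' + a') div 900) + (n' + a') mod 900" by simp
    ultimately have "n + a + 900 * ((n' + a') div 900) = n' + a' + 900 * ((n + a) div 900)"
      by linarith
    then have "n = n' \<and> a = a'"
      using assms p q unfolding good_def pn qn by blast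
    then show "p = q" using pn qn by simp
  qed simp
next
  fix p assume "p \<in> S \<times> AI" then show "phi p \<in> {..<900}"
    unfolding phi_def by (simp add: nat_less_iff)
next
  fix m :: nat assume "m \<in> {..<900}"
  obtain n a j where "n \<in> S" "a \<in> AI" "int m = n + a + 900 * j"
    using assms unfolding good_def by blast
  then have "(n + a) mod 900 = int m mod 900" by simp
  also have "int m mod 900 = int m" using \<open>m \<in> {..<900}\<close> by simp
  finally have "phi (n, a) = m" unfolding phi_def by simp
  then show "\<exists>p\<in>S \<times> AI. m = phi p" using \<open>n \<in> S\<close> \<open>a \<in> AI\<close> by force
qed

lemma good_card: assumes "good S" shows "card S = 30"
proof -
  have "card (S \<times> AI) = 900" using bij_betw_same_card[OF good_bij[OF assms]] by simp
  then have "card S * 30 = 900" by (simp add: card_cartesian_product AI_card)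
  then show ?thesis by simp
qed

lemma sum_om_zero:
  assumes "\<not> 900 dvd d"
  shows "(\<Sum>m<900::nat. om (d * int m)) = 0"
proof -
  have "(\<Sum>m<900::nat. om (d * int m)) = (\<Sum>m<900::nat. om d ^ m)"
    by (simp add: om_pow mult.commute)
  also have "\<dots> = 0"
  proof -
    have "om d \<noteq> 1" using assms om_eq_1 by simp
    moreover have "om d ^ 900 = 1" by (simp add: om_pow om_eq_1)
    ultimately show ?thesis by (simp add: sum_gp_strict)
  qed
  finally show ?thesis .
qed

lemma good_Shat:
  assumes "good S" "a \<in> AI" "a' \<in> AI" "a \<noteq> a'"
  shows "(\<Sum>n\<in>S. om ((a - a') * n)) = 0"
proof -
  define d where "d = a - a'"
  have "\<not> 900 dvd d"
  proof
    assume "900 dvd d"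
    moreover have "d \<noteq> 0" "\<bar>d\<bar> < 900" using assms AI_bounds[of a] AI_bounds[of a'] by (auto simp: d_def)
    ultimately show False
    proof -
      obtain k where k: "d = 900 * k" using \<open>900 dvd d\<close> by (elim dvdE)
      then have "k \<noteq> 0" using \<open>d \<noteq> 0\<close> by simp
      then have "\<bar>k\<bar> \<ge> 1" by linarith
      then have "\<bar>d\<bar> \<ge> 900" using k by (simp add: abs_mult)
      then show False using \<open>\<bar>d\<bar> < 900\<close> by simp
    qed
  qed
  then have "0 = (\<Sum>m<900::nat. om (d * int m))" using sum_om_zero by simp
  also have "\<dots> = (\<Sum>p\<in>S \<times> AI. om (d * int (phi p)))"
    using sum.reindex_bij_betw[OF good_bij[OF assms(1)], of "\<lambda>m. om (d * int m)"] by simp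
  also have "\<dots> = (\<Sum>p\<in>S \<times> AI. om (d * fst p) * om (d * snd p))"
  proof (rule sum.cong)
    fix p assume "p \<in> S \<times> AI"
    have "int (phi p) = (fst p + snd p) mod 900" unfolding phi_def by simp
    then have "om (d * int (phi p)) = om ((d * ((fst p + snd p) mod 900)) mod 900)"
      by (simp add: om_mod)
    also have "(d * ((fst p + snd p) mod 900)) mod 900 = (d * (fst p + snd p)) mod 900"
      by (simp add: mod_mult_right_eq)
    also have "om \<dots> = om (d * fst p) * om (d * snd p)"
      by (simp add: om_mod om_add[symmetric] distrib_left)
    finally show "om (d * int (phi p)) = om (d * fst p) * om (d * snd p)" .
  qed simp
  also have "\<dots> = (\<Sum>n\<in>S. om (d * n)) * (\<Sum>b\<in>AI. om (d * b))"
    by (simp add: sum_product sum.cartesian_product split_def)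
  finally have "(\<Sum>n\<in>S. om (d * n)) * (\<Sum>b\<in>AI. om (d * b)) = 0" by simp
  moreover have "(\<Sum>b\<in>AI. om (d * b)) \<noteq> 0" using Ahat_nz assms(2,3) d_def by simp
  ultimately show ?thesis by (simp add: d_def)
qed

lemma good_complete:
  assumes gS: "good S" and hv: "\<forall>a\<in>AI. (\<Sum>n\<in>S. v n * om (- a * n)) = 0" and nS: "n \<in> S"
  shows "v n = 0"
proof -
  have fS: "finite S" using good_finite[OF gS] .
  have cS: "card S = CARD(30)" using good_card[OF gS] by simp
  obtain g where g: "bij_betw g (UNIV::30 set) S"
    using finite_same_card_bij[of "UNIV::30 set" S] fS cS by auto
  obtain h where h: "bij_betw h (UNIV::30 set) AI"
    using finite_same_card_bij[of "UNIV::30 set" AI] AI_finite AI_card by auto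
  define W :: "complex^30^30" where "W = (\<chi> i j. om (- h i * g j))"
  define W' :: "complex^30^30" where "W' = (\<chi> i j. om (h j * g i) / 30)"
  have sumS: "(\<Sum>j\<in>UNIV. F (g j)) = (\<Sum>n\<in>S. F n)" for F :: "int \<Rightarrow> complex"
    using sum.reindex_bij_betw[OF g, of F] .
  have WW: "W ** W' = mat 1"
  proof -
    have "(\<Sum>k\<in>UNIV. om (- h i * g k) * (om (h i' * g k) / 30)) = (if i = i' then 1 else 0)" for i i'
    proof -
      have "(\<Sum>k\<in>UNIV. om (- h i * g k) * (om (h i' * g k) / 30)) = (\<Sum>k\<in>UNIV. om ((h i' - h i) * g k)) / 30"
        by (simp add: sum_divide_distrib om_add[symmetric] algebra_simps)
      also have "\<dots> = (\<Sum>n\<in>S. om ((h i' - h i) * n)) / 30"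
        using sumS[of "\<lambda>n. om ((h i' - h i) * n)"] by simp
      also have "\<dots> = (if i = i' then 1 else 0)"
      proof (cases "i = i'")
        case True then show ?thesis using good_card[OF gS] by simp
      next
        case False
        then have "h i' \<noteq> h i" using h by (metis bij_betw_iff_bijections UNIV_I)
        moreover have "h i \<in> AI" "h i' \<in> AI" using h bij_betwE by blast+
        ultimately show ?thesis using good_Shat[OF gS, of "h i'" "h i"] False by simp
      qed
      finally show ?thesis .
    qed
    then show ?thesis
      unfolding W_def W'_def matrix_matrix_mult_def mat_def by (simp add: vec_eq_iff)
  qed
  then have W'W: "W' ** W = mat 1" using matrix_left_right_inverse by blast
  define V :: "complex^30" where "V = (\<chi> j. v (g j))"
  have WV: "W *v V = 0"
  proof -
    have "(\<Sum>j\<in>UNIV. om (- h i * g j) * v (g j)) = 0" for i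
    proof -
      have "(\<Sum>j\<in>UNIV. om (- h i * g j) * v (g j)) = (\<Sum>n\<in>S. v n * om (- h i * n))"
        using sumS[of "\<lambda>n. v n * om (- h i * n)"] by (simp add: mult.commute)
      also have "\<dots> = 0" using hv h bij_betwE by blast
      finally show ?thesis .
    qed
    then show ?thesis unfolding W_def V_def matrix_vector_mult_def by (simp add: vec_eq_iff)
  qed
  have "V = (W' ** W) *v V" using W'W by simp
  also have "\<dots> = W' *v (W *v V)" by (simp add: matrix_vector_mul_assoc)
  also have "\<dots> = 0" using WV by simp
  finally have V0: "V = 0" .
  obtain j where "n = g j" using g nS by (metis bij_betw_iff_bijections)
  then show ?thesis using V0 unfolding V_def by (simp add: vec_eq_iff)
qed

definition ee :: "real \<Rightarrow> int \<Rightarrow> real \<Rightarrow> complex" where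
  "ee c k y = cis (2 * pi * c * real_of_int k * y)"

definition trig :: "real \<Rightarrow> (real \<Rightarrow> complex) \<Rightarrow> bool" where
  "trig c \<phi> \<longleftrightarrow> (\<exists>xs::(complex \<times> int) list. \<forall>y. \<phi> y = (\<Sum>(d,k)\<leftarrow>xs. d * ee c k y))"

lemma cont_meas_lebesgue:
  assumes "continuous_on UNIV f" shows "(f::real \<Rightarrow> 'b::topological_space) \<in> borel_measurable lebesgue"
proof -
  have "f \<in> lborel \<rightarrow>\<^sub>M borel" using borel_measurable_continuous_onI[OF assms] by simp
  then show ?thesis by (rule measurable_completion)
qed

lemma ee_add: "ee c (k + l) y = ee c k y * ee c l y"
  by (simp add: ee_def cis_mult distrib_left distrib_right)

lemma norm_ee [simp]: "norm (ee c k y) = 1" by (simp add: ee_def)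

lemma trig_const: "trig c (\<lambda>y. d)"
  unfolding trig_def by (rule exI[of _ "[(d,0)]"]) (simp add: ee_def)

lemma trig_ee: "trig c (ee c k)"
  unfolding trig_def by (rule exI[of _ "[(1,k)]"]) simp

lemma trig_add: assumes "trig c f" "trig c g" shows "trig c (\<lambda>y. f y + g y)"
proof -
  obtain xs where "\<forall>y. f y = (\<Sum>(d,k)\<leftarrow>xs. d * ee c k y)" using assms(1) unfolding trig_def by blast
  moreover obtain ys where "\<forall>y. g y = (\<Sum>(d,k)\<leftarrow>ys. d * ee c k y)" using assms(2) unfolding trig_def by blast
  ultimately show ?thesis unfolding trig_def by (intro exI[of _ "xs @ ys"]) simp
qed

lemma sum_list_mult_pairs:
  "(\<Sum>(d,k)\<leftarrow>xs. d * ee c k y) * (\<Sum>(d,k)\<leftarrow>ys. d * ee c k y) =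
   (\<Sum>(d,k)\<leftarrow>concat (map (\<lambda>(d,k). map (\<lambda>(d',k'). (d * d', k + k')) ys) xs). d * ee c k y)"
proof (induction xs)
  case Nil then show ?case by simp
next
  case (Cons p xs)
  obtain d k where p: "p = (d, k)" by (cases p)
  have "(\<Sum>(d',k')\<leftarrow>map (\<lambda>(d',k'). (d * d', k + k')) ys. d' * ee c k' y) =
        d * ee c k y * (\<Sum>(d,k)\<leftarrow>ys. d * ee c k y)"
    by (induction ys) (auto simp: ee_add algebra_simps)
  then show ?case using Cons by (simp add: p distrib_right)
qed

lemma trig_mult: "trig c f \<Longrightarrow> trig c g \<Longrightarrow> trig c (\<lambda>y. f y * g y)"
  unfolding trig_def using sum_list_mult_pairs by metis

lemma trig_lin2: "trig c (\<lambda>y. d * ee c k y + d' * ee c k' y)"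
proof -
  obtain xs where "xs = [(d,k),(d',k')]" by simp
  then show ?thesis unfolding trig_def by (intro exI[of _ xs]) simp
qed

lemma trig_cos: "trig c (\<lambda>y. complex_of_real (cos (2 * pi * c * y)))"
proof -
  have "complex_of_real (cos (2 * pi * c * y)) = (1/2) * ee c 1 y + (1/2) * ee c (-1) y" for y
    by (simp add: ee_def cis.ctr complex_eq_iff)
  then have e: "(\<lambda>y. complex_of_real (cos (2 * pi * c * y))) = (\<lambda>y. (1/2) * ee c 1 y + (1/2) * ee c (-1) y)" by (rule ext)
  show ?thesis unfolding e by (rule trig_lin2)
qed

lemma trig_sin: "trig c (\<lambda>y. complex_of_real (sin (2 * pi * c * y)))"
proof -
  have "complex_of_real (sin (2 * pi * c * y)) = (-\<i>/2) * ee c 1 y + (\<i>/2) * ee c (-1) y" for y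
    by (simp add: ee_def cis.ctr complex_eq_iff)
  then have e: "(\<lambda>y. complex_of_real (sin (2 * pi * c * y))) = (\<lambda>y. (-\<i>/2) * ee c 1 y + (\<i>/2) * ee c (-1) y)" by (rule ext)
  show ?thesis unfolding e by (rule trig_lin2)
qed

lemma linear_complex_decomp:
  assumes "bounded_linear f"
  shows "f z = Re z * f 1 + Im z * f \<i>"
proof -
  interpret bounded_linear f by fact
  have "z = Re z *\<^sub>R 1 + Im z *\<^sub>R \<i>" by (simp add: complex_eq_iff)
  then have "f z = f (Re z *\<^sub>R 1 + Im z *\<^sub>R \<i>)" by simp
  also have "\<dots> = Re z *\<^sub>R f 1 + Im z *\<^sub>R f \<i>" by (simp add: add scale)
  finally show ?thesis by simp
qed

lemma trig_real_poly:
  assumes "real_polynomial_function q"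
  shows "trig c (\<lambda>y. complex_of_real (q (cis (2 * pi * c * y))))"
  using assms
proof (induction rule: real_polynomial_function.induct)
  case (linear f)
  have "complex_of_real (f (cis (2 * pi * c * y))) =
        complex_of_real (f 1) * complex_of_real (cos (2 * pi * c * y)) +
        complex_of_real (f \<i>) * complex_of_real (sin (2 * pi * c * y))" for y
    using linear_complex_decomp[OF linear, of "cis (2 * pi * c * y)"] by (simp add: mult.commute)
  then have e: "(\<lambda>y. complex_of_real (f (cis (2 * pi * c * y)))) = (\<lambda>y.
        complex_of_real (f 1) * complex_of_real (cos (2 * pi * c * y)) +
        complex_of_real (f \<i>) * complex_of_real (sin (2 * pi * c * y)))" by (rule ext)
  show ?case unfolding e by (rule trig_add[OF trig_mult[OF trig_const trig_cos] trig_mult[OF trig_const trig_sin]])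
next
  case (const d) then show ?case using trig_const by simp
next
  case (add f g) then show ?case using trig_add by simp
next
  case (mult f g) then show ?case using trig_mult by simp
qed

lemma trig_poly:
  assumes "polynomial_function p"
  shows "trig c (\<lambda>y. p (cis (2 * pi * c * y)))"
proof -
  have "real_polynomial_function (Re \<circ> p)" "real_polynomial_function (Im \<circ> p)"
    using assms bounded_linear_Re bounded_linear_Im unfolding polynomial_function_def by blast+
  then have "trig c (\<lambda>y. complex_of_real (Re (p (cis (2 * pi * c * y)))))"
            "trig c (\<lambda>y. complex_of_real (Im (p (cis (2 * pi * c * y)))))"
    using trig_real_poly[of "Re \<circ> p" c] trig_real_poly[of "Im \<circ> p" c] by auto
  from trig_add[OF this(1) trig_mult[OF trig_const this(2)]]
  have "trig c (\<lambda>y. complex_of_real (Re (p (cis (2 * pi * c * y)))) +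
                     \<i> * complex_of_real (Im (p (cis (2 * pi * c * y)))))" .
  then show ?thesis by (simp add: complex_eq[symmetric])
qed

lemma trig_integral:
  fixes H :: "real \<Rightarrow> complex"
  assumes H: "integrable lebesgue H"
    and coef: "\<And>k::int. integral\<^sup>L lebesgue (\<lambda>y. H y * ee c k y) = 0"
    and tr: "trig c \<phi>"
  shows "integrable lebesgue (\<lambda>y. H y * \<phi> y) \<and> integral\<^sup>L lebesgue (\<lambda>y. H y * \<phi> y) = 0"
proof -
  have Hm[measurable]: "H \<in> borel_measurable lebesgue" using H by (rule borel_measurable_integrable)
  have eem[measurable]: "ee c k \<in> borel_measurable lebesgue" for k
    unfolding ee_def by (rule cont_meas_lebesgue) (intro continuous_intros)
  have ie: "integrable lebesgue (\<lambda>y. H y * ee c k y)" for k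
    by (rule Bochner_Integration.integrable_bound[OF H]) (auto simp: norm_mult)
  from tr obtain xs where xs: "\<forall>y. \<phi> y = (\<Sum>(d,k)\<leftarrow>xs. d * ee c k y)" unfolding trig_def by (elim exE)
  have "integrable lebesgue (\<lambda>y. H y * (\<Sum>(d,k)\<leftarrow>xs. d * ee c k y)) \<and>
        integral\<^sup>L lebesgue (\<lambda>y. H y * (\<Sum>(d,k)\<leftarrow>xs. d * ee c k y)) = 0"
  proof (induction xs)
    case Nil then show ?case by simp
  next
    case (Cons p xs)
    obtain d k where p: "p = (d, k)" by (cases p)
    have eq: "(\<lambda>y. H y * (\<Sum>(d,k)\<leftarrow>p#xs. d * ee c k y)) =
              (\<lambda>y. d * (H y * ee c k y) + H y * (\<Sum>(d,k)\<leftarrow>xs. d * ee c k y))"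
      by (rule ext) (simp add: p distrib_left mult.left_commute)
    have i1: "integrable lebesgue (\<lambda>y. d * (H y * ee c k y))" using ie[of k] by (rule integrable_mult_right)
    have i2: "integrable lebesgue (\<lambda>y. H y * (\<Sum>(d,k)\<leftarrow>xs. d * ee c k y))" using Cons.IH by (rule conjunct1)
    have z2: "integral\<^sup>L lebesgue (\<lambda>y. H y * (\<Sum>(d,k)\<leftarrow>xs. d * ee c k y)) = 0" using Cons.IH by (rule conjunct2)
    have z1: "integral\<^sup>L lebesgue (\<lambda>y. d * (H y * ee c k y)) = 0"
      using coef[of k] by (simp only: integral_mult_right_zero mult_zero_right)
    show ?case unfolding eq
      using Bochner_Integration.integrable_add[OF i1 i2] Bochner_Integration.integral_add[OF i1 i2] z1 z2 by simp
  qed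
  moreover have "(\<lambda>y. H y * \<phi> y) = (\<lambda>y. H y * (\<Sum>(d,k)\<leftarrow>xs. d * ee c k y))" using xs by simp
  ultimately show ?thesis by simp
qed

lemma cont_integral_zero:
  fixes H :: "real \<Rightarrow> complex" and g :: "complex \<Rightarrow> complex"
  assumes H: "integrable lebesgue H"
    and coef: "\<And>k::int. integral\<^sup>L lebesgue (\<lambda>y. H y * ee c k y) = 0"
    and g: "continuous_on UNIV g" and B: "\<And>z. norm (g z) \<le> B"
  shows "integral\<^sup>L lebesgue (\<lambda>y. H y * g (cis (2*pi*c*y))) = 0"
proof -
  define G where "G = (\<lambda>y. g (cis (2*pi*c*y)))"
  have Hm[measurable]: "H \<in> borel_measurable lebesgue" using H by (rule borel_measurable_integrable)
  have Gm[measurable]: "G \<in> borel_measurable lebesgue" unfolding G_def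
    by (rule cont_meas_lebesgue) (intro continuous_on_compose2[OF g] continuous_intros, auto)
  have iG: "integrable lebesgue (\<lambda>y. H y * G y)"
  proof (rule Bochner_Integration.integrable_bound[OF integrable_mult_right[OF H, of "complex_of_real B"]])
    show "AE x in lebesgue. norm (H x * G x) \<le> norm (complex_of_real B * H x)"
    proof (rule AE_I2)
      fix x
      have "norm (G x) \<le> \<bar>B\<bar>" using B[of "cis (2*pi*c*x)"] unfolding G_def by linarith
      then have "norm (H x) * norm (G x) \<le> norm (H x) * \<bar>B\<bar>" by (simp add: mult_left_mono)
      then show "norm (H x * G x) \<le> norm (complex_of_real B * H x)" by (simp add: norm_mult mult.commute)
    qed
  qed simp
  define I where "I = integral\<^sup>L lebesgue (\<lambda>y. H y * G y)"
  define M where "M = integral\<^sup>L lebesgue (\<lambda>y. norm (H y))"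
  have M0: "M \<ge> 0" unfolding M_def by simp
  have bound: "norm I \<le> e * M" if e: "e > 0" for e
  proof -
    obtain p where p: "polynomial_function p" and pe: "\<forall>z\<in>sphere 0 1. norm (g z - p z) < e"
      using Stone_Weierstrass_polynomial_function[OF compact_sphere continuous_on_subset[OF g] e] by blast
    define P where "P = (\<lambda>y. p (cis (2*pi*c*y)))"
    have "integrable lebesgue (\<lambda>y. H y * P y) \<and> integral\<^sup>L lebesgue (\<lambda>y. H y * P y) = 0"
      unfolding P_def by (rule trig_integral[OF H coef trig_poly[OF p]])
    then have iP: "integrable lebesgue (\<lambda>y. H y * P y)" and zP: "integral\<^sup>L lebesgue (\<lambda>y. H y * P y) = 0"
      by auto
    have "I = integral\<^sup>L lebesgue (\<lambda>y. H y * G y) - integral\<^sup>L lebesgue (\<lambda>y. H y * P y)"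
      using zP by (simp add: I_def)
    also have "\<dots> = integral\<^sup>L lebesgue (\<lambda>y. H y * G y - H y * P y)"
      by (rule Bochner_Integration.integral_diff[OF iG iP, symmetric])
    finally have "norm I \<le> integral\<^sup>L lebesgue (\<lambda>y. norm (H y * G y - H y * P y))"
      using integral_norm_bound by metis
    also have "\<dots> \<le> integral\<^sup>L lebesgue (\<lambda>y. e * norm (H y))"
    proof (rule integral_mono)
      show "integrable lebesgue (\<lambda>y. norm (H y * G y - H y * P y))"
        using Bochner_Integration.integrable_diff[OF iG iP] by (rule integrable_norm)
      show "integrable lebesgue (\<lambda>y. e * norm (H y))" using H by simp
      fix y
      have "cis (2*pi*c*y) \<in> sphere 0 1" by simp
      then have "norm (G y - P y) \<le> e" using pe unfolding G_def P_def by (simp add: less_imp_le)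
      then have "norm (H y) * norm (G y - P y) \<le> norm (H y) * e" by (simp add: mult_left_mono)
      moreover have "H y * G y - H y * P y = H y * (G y - P y)" by (simp add: right_diff_distrib)
      ultimately show "norm (H y * G y - H y * P y) \<le> e * norm (H y)"
        by (simp only: norm_mult mult.commute)
    qed
    also have "\<dots> = e * M" unfolding M_def by simp
    finally show ?thesis .
  qed
  have "norm I = 0"
  proof (rule ccontr)
    assume "norm I \<noteq> 0"
    then have nI: "norm I > 0" by simp
    define e where "e = norm I / (2 * (M + 1))"
    have "e > 0" unfolding e_def using nI M0 by simp
    then have "norm I \<le> e * M" by (rule bound)
    also have "e * M < norm I"
    proof -
      have "e * M \<le> norm I / 2" unfolding e_def using nI M0 by (simp add: field_simps)
      then show ?thesis using nI by linarith
    qed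
    finally show False by simp
  qed
  then show ?thesis unfolding I_def G_def by simp
qed

lemma cis_inj:
  assumes "0 \<le> a" "a < 2*pi" "0 \<le> b" "b < 2*pi" "cis a = cis b"
  shows "a = b"
proof -
  have "cis (a - b) = 1" using assms(5) by (simp add: cis_divide[symmetric])
  then have "exp (\<i> * complex_of_real (a - b)) = 1" by (simp add: cis_conv_exp)
  then obtain n :: int where n: "a - b = of_int (2 * n) * pi" by (auto simp: exp_eq_1)
  have "\<bar>a - b\<bar> < 2 * pi" using assms by linarith
  then have "\<bar>of_int n\<bar> * (2 * pi) < 1 * (2 * pi)" using n by (simp add: abs_mult)
  then have "\<bar>real_of_int n\<bar> < 1" using pi_gt_zero by (simp only: mult_less_cancel_right)
  then have "n = 0" by linarith
  then show ?thesis using n by simp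
qed

lemma atMost_integral_zero:
  fixes H :: "real \<Rightarrow> complex"
  assumes c: "c > 0" and H: "integrable lebesgue H"
    and supp: "\<And>y. y \<notin> {0..<1/c} \<Longrightarrow> H y = 0"
    and coef: "\<And>k::int. integral\<^sup>L lebesgue (\<lambda>y. H y * ee c k y) = 0"
  shows "integral\<^sup>L lebesgue (\<lambda>y. indicator {..w} y *\<^sub>R H y) = 0"
proof -
  have Hm[measurable]: "H \<in> borel_measurable lebesgue" using H by (rule borel_measurable_integrable)
  have H0: "integral\<^sup>L lebesgue H = 0" using coef[of 0] by (simp add: ee_def)
  consider "w < 0" | "w \<ge> 1/c" | "0 \<le> w" "w < 1/c" by linarith
  then show ?thesis
  proof cases
    case 1
    have "(\<lambda>y. indicator {..w} y *\<^sub>R H y) = (\<lambda>y. 0)" using supp 1 by (auto simp: indicator_def)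
    then show ?thesis by simp
  next
    case 2
    have "indicator {..w} y *\<^sub>R H y = H y" for y using supp[of y] 2 by (auto simp: indicator_def)
    then show ?thesis using H0 by simp
  next
    case 3
    define e where "e = (\<lambda>y::real. cis (2*pi*c*y))"
    define K where "K = e ` {0..w}"
    have "compact K" unfolding K_def e_def
      by (intro compact_continuous_image continuous_intros) auto
    then have Kc: "closed K" by (rule compact_imp_closed)
    have Kne: "K \<noteq> {}" using 3 unfolding K_def by auto
    define g where "g = (\<lambda>(n::nat) z. complex_of_real (max 0 (1 - real n * infdist z K)))"
    have gc: "continuous_on UNIV (g n)" for n unfolding g_def
      by (intro continuous_intros)
    have gb: "norm (g n z) \<le> 1" for n z
    proof -
      have "infdist z K \<ge> 0" by (rule infdist_nonneg)
      then have "max 0 (1 - real n * infdist z K) \<le> 1" by simp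
      then show ?thesis unfolding g_def by simp
    qed
    have z: "integral\<^sup>L lebesgue (\<lambda>y. H y * g n (e y)) = 0" for n
      unfolding e_def by (rule cont_integral_zero[OF H coef gc gb])
    have inK: "e y \<in> K \<longleftrightarrow> y \<le> w" if y: "0 \<le> y" "y < 1/c" for y
    proof
      assume "e y \<in> K"
      then obtain y' where y': "y' \<in> {0..w}" "e y = e y'" unfolding K_def by auto
      have "2*pi*c*y = 2*pi*c*y'"
      proof (rule cis_inj)
        show "0 \<le> 2*pi*c*y" "0 \<le> 2*pi*c*y'" using c y y' by auto
        have "c * y < 1" using c y by (auto simp: field_simps)
        moreover have "c * y' \<le> c * w" using c y' by (auto intro: mult_left_mono)
        moreover have "c * w < 1" using c 3 by (auto simp: field_simps)
        ultimately have "c * y < 1" "c * y' < 1" by auto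
        then show "2*pi*c*y < 2*pi" "2*pi*c*y' < 2*pi" by (simp_all add: mult.assoc)
        show "cis (2*pi*c*y) = cis (2*pi*c*y')" using y' unfolding e_def by simp
      qed
      then have "y = y'" using c by simp
      then show "y \<le> w" using y' by simp
    next
      assume "y \<le> w" then show "e y \<in> K" unfolding K_def using y by auto
    qed
    have lim: "(\<lambda>n. H y * g n (e y)) \<longlonglongrightarrow> indicator {..w} y *\<^sub>R H y" for y
    proof (cases "H y = 0")
      case True then show ?thesis by simp
    next
      case False
      then have y: "0 \<le> y" "y < 1/c" using supp by auto
      show ?thesis
      proof (cases "y \<le> w")
        case True
        then have "e y \<in> K" using inK y by simp
        then have "g n (e y) = 1" for n unfolding g_def by simp
        then show ?thesis using True by simp
      next
        case False
        then have "e y \<notin> K" using inK y by simp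
        then have d: "infdist (e y) K > 0" using infdist_pos_not_in_closed[OF Kc Kne] by simp
        obtain N :: nat where N: "real N > 1 / infdist (e y) K" using reals_Archimedean2 by blast
        have "eventually (\<lambda>n. H y * g n (e y) = 0) sequentially"
        proof (rule eventually_sequentiallyI[of N])
          fix n assume "N \<le> n"
          then have "real n > 1 / infdist (e y) K" using N by linarith
          then have "real n * infdist (e y) K > 1" using d by (simp add: field_simps)
          then show "H y * g n (e y) = 0" unfolding g_def by simp
        qed
        then have "(\<lambda>n. H y * g n (e y)) \<longlonglongrightarrow> 0" by (rule tendsto_eventually)
        then show ?thesis using False by simp
      qed
    qed
    have gm[measurable]: "(\<lambda>y. g n (e y)) \<in> borel_measurable lebesgue" for n
      unfolding e_def by (rule cont_meas_lebesgue) (intro continuous_on_compose2[OF gc] continuous_intros, auto)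
    have "(\<lambda>n. integral\<^sup>L lebesgue (\<lambda>y. H y * g n (e y))) \<longlonglongrightarrow> integral\<^sup>L lebesgue (\<lambda>y. indicator {..w} y *\<^sub>R H y)"
    proof (rule integral_dominated_convergence[where w="\<lambda>y. norm (H y)"])
      have "{..w} \<in> sets lebesgue" by simp
      then show "(\<lambda>y. indicator {..w} y *\<^sub>R H y) \<in> borel_measurable lebesgue"
        using Hm by (intro borel_measurable_scaleR borel_measurable_indicator)
      show "(\<lambda>y. H y * g n (e y)) \<in> borel_measurable lebesgue" for n
        using Hm gm[of n] by (rule borel_measurable_times)
      show "integrable lebesgue (\<lambda>y. norm (H y))" using H by simp
      show "AE y in lebesgue. (\<lambda>n. H y * g n (e y)) \<longlonglongrightarrow> indicator {..w} y *\<^sub>R H y"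
        using lim by simp
      show "AE y in lebesgue. norm (H y * g n (e y)) \<le> norm (H y)" for n
      proof (rule AE_I2)
        fix y have "norm (H y) * norm (g n (e y)) \<le> norm (H y) * 1"
          using gb[of n "e y"] by (intro mult_left_mono) auto
        then show "norm (H y * g n (e y)) \<le> norm (H y)" by (simp add: norm_mult)
      qed
    qed
    then have "(\<lambda>n. 0) \<longlonglongrightarrow> integral\<^sup>L lebesgue (\<lambda>y. indicator {..w} y *\<^sub>R H y)" using z by simp
    then show ?thesis by (simp add: LIMSEQ_const_iff)
  qed
qed

lemma borel_lebesgue: "B \<in> sets borel \<Longrightarrow> B \<in> sets lebesgue"
proof -
  assume "B \<in> sets borel"
  then have "B \<in> sets lborel" by simp
  then show ?thesis by (rule sets_completionI_sets)
qed

lemma borel_integral_zero: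
  fixes H :: "real \<Rightarrow> complex"
  assumes H: "integrable lebesgue H" and H0: "integral\<^sup>L lebesgue H = 0"
    and at: "\<And>w. integral\<^sup>L lebesgue (\<lambda>y. indicator {..w} y *\<^sub>R H y) = 0"
    and B: "B \<in> sets borel"
  shows "integral\<^sup>L lebesgue (\<lambda>y. indicator B y *\<^sub>R H y) = 0"
proof -
  have Hm[measurable]: "H \<in> borel_measurable lebesgue" using H by (rule borel_measurable_integrable)
  have sb: "sets borel = sigma_sets (UNIV::real set) (range atMost)"
    by (subst borel_eq_atMost) (simp add: sets_measure_of)
  have iA: "integrable lebesgue (\<lambda>y. indicator A y *\<^sub>R H y)" if "A \<in> sets borel" for A
    using borel_lebesgue[OF that] H by (rule integrable_mult_indicator)
  have Bs: "B \<in> sigma_sets UNIV (range atMost)" using B sb by simp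
  show ?thesis
  proof (rule sigma_sets_induct_disjoint[of "range atMost" UNIV B
        "\<lambda>A. integral\<^sup>L lebesgue (\<lambda>y. indicator A y *\<^sub>R H y) = 0"])
    show "Int_stable (range (atMost :: real \<Rightarrow> real set))"
      unfolding Int_stable_def by (auto intro: image_eqI[where x="min _ _"])
    show "range atMost \<subseteq> Pow (UNIV :: real set)" by simp
    show "B \<in> sigma_sets UNIV (range atMost)" by (rule Bs)
  next
    fix A :: "real set" assume "A \<in> range atMost" then show "integral\<^sup>L lebesgue (\<lambda>y. indicator A y *\<^sub>R H y) = 0" using at by auto
  next
    show "integral\<^sup>L lebesgue (\<lambda>y. indicator {} y *\<^sub>R H y) = 0" by simp
  next
    fix A :: "real set" assume c1: "A \<in> sigma_sets UNIV (range atMost)"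
      and c2: "integral\<^sup>L lebesgue (\<lambda>y. indicator A y *\<^sub>R H y) = 0"
    have Ab: "A \<in> sets borel" using c1 sb by simp
    have "(\<lambda>y. indicator (UNIV - A) y *\<^sub>R H y) = (\<lambda>y. H y - indicator A y *\<^sub>R H y)"
      by (auto simp: indicator_def)
    then show "integral\<^sup>L lebesgue (\<lambda>y. indicator (UNIV - A) y *\<^sub>R H y) = 0"
      using Bochner_Integration.integral_diff[OF H iA[OF Ab]] c2 H0 by simp
  next
    fix A :: "nat \<Rightarrow> real set" assume u1: "disjoint_family A" and u2: "range A \<subseteq> sigma_sets UNIV (range atMost)"
      and u3: "\<And>i. integral\<^sup>L lebesgue (\<lambda>y. indicator (A i) y *\<^sub>R H y) = 0"
    have Ab: "A i \<in> sets borel" for i using u2 sb by auto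
    have UAb: "(\<Union>i<n. A i) \<in> sets borel" for n using Ab by auto
    have fin: "integral\<^sup>L lebesgue (\<lambda>y. indicator (\<Union>i<n. A i) y *\<^sub>R H y) = 0" for n
    proof -
      have "indicator (\<Union>i<n. A i) y = (\<Sum>i<n. indicator (A i) y :: real)" for y
        using indicator_UN_disjoint[of "{..<n}" A y] disjoint_family_on_mono[OF subset_UNIV u1] by simp
      then have "(\<lambda>y. indicator (\<Union>i<n. A i) y *\<^sub>R H y) = (\<lambda>y. \<Sum>i<n. indicator (A i) y *\<^sub>R H y)"
        by (simp add: scaleR_sum_left)
      moreover have "integral\<^sup>L lebesgue (\<lambda>y. \<Sum>i<n. indicator (A i) y *\<^sub>R H y) = (\<Sum>i<n. integral\<^sup>L lebesgue (\<lambda>y. indicator (A i) y *\<^sub>R H y))"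
        by (rule Bochner_Integration.integral_sum) (rule iA[OF Ab])
      ultimately show ?thesis using u3 by simp
    qed
    have "(\<lambda>n. integral\<^sup>L lebesgue (\<lambda>y. indicator (\<Union>i<n. A i) y *\<^sub>R H y)) \<longlonglongrightarrow>
          integral\<^sup>L lebesgue (\<lambda>y. indicator (\<Union>i. A i) y *\<^sub>R H y)"
    proof (rule integral_dominated_convergence[where w="\<lambda>y. norm (H y)"])
      have "(\<Union>i. A i) \<in> sets borel" using Ab by auto
      then show "(\<lambda>y. indicator (\<Union>i. A i) y *\<^sub>R H y) \<in> borel_measurable lebesgue"
        using Hm by (intro borel_measurable_scaleR borel_measurable_indicator borel_lebesgue)
      show "(\<lambda>y. indicator (\<Union>i<n. A i) y *\<^sub>R H y) \<in> borel_measurable lebesgue" for n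
        using Hm UAb[of n] by (intro borel_measurable_scaleR borel_measurable_indicator borel_lebesgue)
      show "integrable lebesgue (\<lambda>y. norm (H y))" using H by simp
      show "AE y in lebesgue. (\<lambda>n. indicator (\<Union>i<n. A i) y *\<^sub>R H y) \<longlonglongrightarrow> indicator (\<Union>i. A i) y *\<^sub>R H y"
        by (intro AE_I2 tendsto_scaleR LIMSEQ_indicator_UN tendsto_const)
      show "AE y in lebesgue. norm (indicator (\<Union>i<n. A i) y *\<^sub>R H y) \<le> norm (H y)" for n
        by (intro AE_I2) (auto simp: indicator_def)
    qed
    then show "integral\<^sup>L lebesgue (\<lambda>y. indicator (\<Union>(range A)) y *\<^sub>R H y) = 0" using fin by (simp add: LIMSEQ_const_iff)
  qed
qed

lemma AE_Re_le0:
  fixes G :: "real \<Rightarrow> complex"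
  assumes G: "integrable lebesgue G"
    and z: "\<And>B. B \<in> sets borel \<Longrightarrow> integral\<^sup>L lebesgue (\<lambda>y. indicator B y *\<^sub>R G y) = 0"
  shows "AE y in lebesgue. Re (G y) \<le> 0"
proof -
  have Gm[measurable]: "G \<in> borel_measurable lebesgue" using G by (rule borel_measurable_integrable)
  define B0 where "B0 = {y. 0 < Re (G y)}"
  have Rm: "(\<lambda>y. Re (G y)) \<in> borel_measurable lebesgue" using Gm borel_measurable_Re by (rule measurable_compose)
  have "{y \<in> space lebesgue. (\<lambda>_. 0) y < Re (G y)} \<in> sets lebesgue"
    using borel_measurable_const Rm by (rule borel_measurable_less)
  then have B0m: "B0 \<in> sets lebesgue" unfolding B0_def by simp
  then obtain S N N' where SN: "B0 = S \<union> N" "N \<subseteq> N'" "N' \<in> null_sets lborel" "S \<in> sets lborel"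
    by (elim sets_completionE) blast
  have N'l: "N' \<in> null_sets lebesgue" using SN(3) by (rule null_sets_completionI)
  have "AE y in lebesgue. y \<notin> N'" using N'l by (rule AE_not_in)
  then have ae: "AE y in lebesgue. indicator B0 y *\<^sub>R G y = indicator S y *\<^sub>R G y"
    by eventually_elim (use SN in \<open>auto simp: indicator_def\<close>)
  have Sb: "S \<in> sets borel" using SN(4) by simp
  have "integral\<^sup>L lebesgue (\<lambda>y. indicator B0 y *\<^sub>R G y) = integral\<^sup>L lebesgue (\<lambda>y. indicator S y *\<^sub>R G y)"
  proof (rule integral_cong_AE)
    show "(\<lambda>y. indicator B0 y *\<^sub>R G y) \<in> borel_measurable lebesgue"
      using Gm B0m by (intro borel_measurable_scaleR borel_measurable_indicator)
    show "(\<lambda>y. indicator S y *\<^sub>R G y) \<in> borel_measurable lebesgue"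
      using Gm Sb by (intro borel_measurable_scaleR borel_measurable_indicator borel_lebesgue)
  qed (rule ae)
  also have "\<dots> = 0" using z[OF Sb] .
  finally have z0: "integral\<^sup>L lebesgue (\<lambda>y. indicator B0 y *\<^sub>R G y) = 0" .
  have iB: "integrable lebesgue (\<lambda>y. indicator B0 y *\<^sub>R G y)"
    using B0m G by (rule integrable_mult_indicator)
  have "integral\<^sup>L lebesgue (\<lambda>y. Re (indicator B0 y *\<^sub>R G y)) = Re (integral\<^sup>L lebesgue (\<lambda>y. indicator B0 y *\<^sub>R G y))"
    using iB by (rule integral_Re)
  then have zr: "integral\<^sup>L lebesgue (\<lambda>y. indicator B0 y * Re (G y)) = 0" using z0 by simp
  have iR: "integrable lebesgue (\<lambda>y. indicator B0 y * Re (G y))"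
    using integrable_Re[OF iB] by simp
  have "AE y in lebesgue. indicator B0 y * Re (G y) = 0"
    using integral_nonneg_eq_0_iff_AE[OF iR] zr by (auto simp: indicator_def B0_def)
  then show ?thesis by eventually_elim (auto simp: indicator_def B0_def split: if_splits)
qed

lemma fourier_unique:
  fixes H :: "real \<Rightarrow> complex"
  assumes c: "c > 0" and H: "integrable lebesgue H"
    and supp: "\<And>y. y \<notin> {0..<1/c} \<Longrightarrow> H y = 0"
    and coef: "\<And>k::int. integral\<^sup>L lebesgue (\<lambda>y. H y * ee c k y) = 0"
  shows "AE y in lebesgue. H y = 0"
proof -
  have H0: "integral\<^sup>L lebesgue H = 0" using coef[of 0] by (simp add: ee_def)
  have zB: "integral\<^sup>L lebesgue (\<lambda>y. indicator B y *\<^sub>R H y) = 0" if "B \<in> sets borel" for B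
    using borel_integral_zero[OF H H0 atMost_integral_zero[OF c H supp coef] that] .
  have gen: "AE y in lebesgue. Re (u * H y) \<le> 0" for u :: complex
  proof (rule AE_Re_le0)
    show "integrable lebesgue (\<lambda>y. u * H y)" using H by simp
    fix B :: "real set" assume "B \<in> sets borel"
    have e: "(\<lambda>y. indicator B y *\<^sub>R (u * H y)) = (\<lambda>y. u * (indicator B y *\<^sub>R H y))" by simp
    show "integral\<^sup>L lebesgue (\<lambda>y. indicator B y *\<^sub>R (u * H y)) = 0"
      unfolding e integral_mult_right_zero using zB[OF \<open>B \<in> sets borel\<close>] by simp
  qed
  have "AE y in lebesgue. Re (1 * H y) \<le> 0 \<and> Re ((-1) * H y) \<le> 0 \<and> Re (\<i> * H y) \<le> 0 \<and> Re ((-\<i>) * H y) \<le> 0"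
    using gen[of 1] gen[of "-1"] gen[of "\<i>"] gen[of "-\<i>"] by eventually_elim auto
  then show ?thesis by eventually_elim (auto simp: complex_eq_iff)
qed

lemma transl_integral:
  fixes F :: "real \<Rightarrow> 'a::euclidean_space"
  assumes "integrable lebesgue F"
  shows "integrable lebesgue (\<lambda>x. F (x + t))" "integral\<^sup>L lebesgue (\<lambda>x. F (x + t)) = integral\<^sup>L lebesgue F"
proof -
  have "has_bochner_integral lebesgue F (integral\<^sup>L lebesgue F)"
    using assms by (rule has_bochner_integral_integrable)
  then have "has_bochner_integral lebesgue (\<lambda>x. F (t + 1 * x)) (integral\<^sup>L lebesgue F /\<^sub>R \<bar>1\<bar>)"
    using has_bochner_integral_lebesgue_real_affine_iff[of 1 F _ t] by simp
  then have h: "has_bochner_integral lebesgue (\<lambda>x. F (x + t)) (integral\<^sup>L lebesgue F)"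
    by (simp add: add.commute)
  then show "integrable lebesgue (\<lambda>x. F (x + t))" by (simp add: has_bochner_integral_iff)
  show "integral\<^sup>L lebesgue (\<lambda>x. F (x + t)) = integral\<^sup>L lebesgue F"
    using h by (simp add: has_bochner_integral_iff)
qed

definition Iv :: "int \<Rightarrow> real set" where
  "Iv n = {real_of_int n / 900 ..< real_of_int n / 900 + 1/900}"

lemma Iv_iff: "x \<in> Iv n \<longleftrightarrow> n = \<lfloor>900 * x\<rfloor>"
proof -
  have a: "real_of_int n / 900 \<le> x \<longleftrightarrow> real_of_int n \<le> 900 * x" by (simp add: divide_le_eq mult.commute)
  have b: "x < real_of_int n / 900 + 1/900 \<longleftrightarrow> 900 * x < real_of_int n + 1"
    by (simp add: add_divide_distrib[symmetric] less_divide_eq mult.commute)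
  have "x \<in> Iv n \<longleftrightarrow> real_of_int n \<le> 900 * x \<and> 900 * x < real_of_int n + 1"
    unfolding Iv_def atLeastLessThan_iff a b ..
  also have "\<dots> \<longleftrightarrow> \<lfloor>900 * x\<rfloor> = n" by (rule floor_eq_iff[symmetric])
  finally show ?thesis by auto
qed

lemma Iv_sets [simp]: "Iv n \<in> sets lebesgue" unfolding Iv_def by simp

lemma Iv_shift: "indicator (Iv n) (x + real_of_int n / 900) = (indicator {0..<1/900} x :: real)"
  unfolding Iv_def by (auto simp: indicator_def)

abbreviation dec :: "nat \<Rightarrow> int" where "dec \<equiv> int_decode"

lemma sum_indicator_Iv_le: "(\<Sum>i<N. indicator (Iv (dec i)) x) \<le> (1::real)"
proof -
  have "disjoint_family_on (\<lambda>i. Iv (dec i)) {..<N}"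
    unfolding disjoint_family_on_def
  proof (intro ballI impI)
    fix i j :: nat assume "i \<noteq> j"
    then have "dec i \<noteq> dec j" by (simp add: int_decode_eq)
    then show "Iv (dec i) \<inter> Iv (dec j) = {}" by (auto simp: Iv_iff)
  qed
  then have "indicator (\<Union>i<N. Iv (dec i)) x = (\<Sum>i<N. indicator (Iv (dec i)) x :: real)"
    by (intro indicator_UN_disjoint) simp_all
  moreover have "indicator (\<Union>i<N. Iv (dec i)) x \<le> (1::real)" by (simp add: indicator_def)
  ultimately show ?thesis by simp
qed

lemma periodize:
  fixes \<psi> :: "real \<Rightarrow> complex"
  assumes \<psi>: "integrable lebesgue \<psi>"
    and fin: "AE y in lebesgue. finite {n::int. \<psi> (y + real_of_int n / 900) \<noteq> 0}"
  shows "integrable lebesgue (\<lambda>y. indicator {0..<1/900} y *\<^sub>R (\<Sum>i. \<psi> (y + real_of_int (dec i) / 900)))"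
    and "integral\<^sup>L lebesgue (\<lambda>y. indicator {0..<1/900} y *\<^sub>R (\<Sum>i. \<psi> (y + real_of_int (dec i) / 900))) = integral\<^sup>L lebesgue \<psi>"
proof -
  define f where "f = (\<lambda>i y. indicator {0..<1/900} y *\<^sub>R \<psi> (y + real_of_int (dec i) / 900))"
  define g where "g = (\<lambda>i x. indicator (Iv (dec i)) x *\<^sub>R \<psi> x)"
  have \<psi>m[measurable]: "\<psi> \<in> borel_measurable lebesgue" using \<psi> by (rule borel_measurable_integrable)
  have ig: "integrable lebesgue (g i)" for i unfolding g_def
    by (rule integrable_mult_indicator[OF Iv_sets \<psi>])
  have ign: "integrable lebesgue (\<lambda>x. norm (g i x))" for i using ig by (rule integrable_norm)
  have fg: "f i y = g i (y + real_of_int (dec i) / 900)" for i y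
    unfolding f_def g_def Iv_shift ..
  have if_: "integrable lebesgue (f i)" for i
    unfolding fg[abs_def] by (rule transl_integral(1)[OF ig])
  have intf: "integral\<^sup>L lebesgue (f i) = integral\<^sup>L lebesgue (g i)" for i
    unfolding fg[abs_def] by (rule transl_integral(2)[OF ig])
  have intfn: "integral\<^sup>L lebesgue (\<lambda>y. norm (f i y)) = integral\<^sup>L lebesgue (\<lambda>x. norm (g i x))" for i
    unfolding fg by (rule transl_integral(2)[OF ign, where t="real_of_int (dec i) / 900"])
  have gn: "norm (g i x) = indicator (Iv (dec i)) x * norm (\<psi> x)" for i x
    unfolding g_def by (simp add: indicator_def)
  have summ: "summable (\<lambda>i. integral\<^sup>L lebesgue (\<lambda>x. norm (g i x)))"
  proof (rule summableI_nonneg_bounded)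
    show "0 \<le> integral\<^sup>L lebesgue (\<lambda>x. norm (g i x))" for i by simp
    fix N
    have "(\<Sum>i<N. integral\<^sup>L lebesgue (\<lambda>x. norm (g i x))) = integral\<^sup>L lebesgue (\<lambda>x. \<Sum>i<N. norm (g i x))"
      by (rule Bochner_Integration.integral_sum[symmetric]) (rule ign)
    also have "\<dots> \<le> integral\<^sup>L lebesgue (\<lambda>x. norm (\<psi> x))"
    proof (rule integral_mono)
      show "integrable lebesgue (\<lambda>x. \<Sum>i<N. norm (g i x))" using ign by simp
      show "integrable lebesgue (\<lambda>x. norm (\<psi> x))" using \<psi> by simp
      fix x
      have "(\<Sum>i<N. norm (g i x)) = (\<Sum>i<N. indicator (Iv (dec i)) x) * norm (\<psi> x)"
        unfolding gn by (simp add: sum_distrib_right)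
      also have "\<dots> \<le> 1 * norm (\<psi> x)"
        using sum_indicator_Iv_le by (intro mult_right_mono) auto
      finally show "(\<Sum>i<N. norm (g i x)) \<le> norm (\<psi> x)" by simp
    qed
    finally show "(\<Sum>i<N. integral\<^sup>L lebesgue (\<lambda>x. norm (g i x))) \<le> integral\<^sup>L lebesgue (\<lambda>x. norm (\<psi> x))" .
  qed
  have summf: "summable (\<lambda>i. integral\<^sup>L lebesgue (\<lambda>y. norm (f i y)))" using summ intfn by simp
  have gsing: "g i x = 0" if "i \<noteq> int_encode \<lfloor>900 * x\<rfloor>" for i x
  proof -
    have "dec i \<noteq> \<lfloor>900 * x\<rfloor>" using that int_decode_inverse by metis
    then show ?thesis by (simp add: g_def Iv_iff indicator_def)
  qed
  have gsum: "(\<Sum>i. g i x) = \<psi> x" for x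
  proof -
    have "(\<Sum>i. g i x) = (\<Sum>i\<in>{int_encode \<lfloor>900 * x\<rfloor>}. g i x)"
      by (rule suminf_finite) (use gsing in auto)
    also have "\<dots> = \<psi> x" unfolding g_def using Iv_iff by (simp add: indicator_def)
    finally show ?thesis .
  qed
  have gsumn: "summable (\<lambda>i. norm (g i x))" for x
    by (rule summable_finite[of "{int_encode \<lfloor>900 * x\<rfloor>}"]) (use gsing in auto)
  have "integral\<^sup>L lebesgue \<psi> = integral\<^sup>L lebesgue (\<lambda>x. \<Sum>i. g i x)" using gsum by simp
  also have "\<dots> = (\<Sum>i. integral\<^sup>L lebesgue (g i))"
    by (rule integral_suminf[OF ig _ summ]) (simp add: gsumn)
  also have "\<dots> = (\<Sum>i. integral\<^sup>L lebesgue (f i))" using intf by simp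
  finally have e1: "integral\<^sup>L lebesgue \<psi> = (\<Sum>i. integral\<^sup>L lebesgue (f i))" .
  have aef: "AE y in lebesgue. summable (\<lambda>i. norm (f i y))"
    using fin
  proof eventually_elim
    fix y assume F: "finite {n::int. \<psi> (y + real_of_int n / 900) \<noteq> 0}"
    have "finite (dec -` {n::int. \<psi> (y + real_of_int n / 900) \<noteq> 0})"
      using F by (rule finite_vimageI) (simp add: inj_int_decode)
    then show "summable (\<lambda>i. norm (f i y))"
      by (rule summable_finite) (auto simp: f_def)
  qed
  have sf: "(\<Sum>i. f i y) = indicator {0..<1/900} y *\<^sub>R (\<Sum>i. \<psi> (y + real_of_int (dec i) / 900))" for y
    unfolding f_def by (cases "y \<in> {0..<1/900}") simp_all
  show "integrable lebesgue (\<lambda>y. indicator {0..<1/900} y *\<^sub>R (\<Sum>i. \<psi> (y + real_of_int (dec i) / 900)))"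
    using integrable_suminf[OF if_ aef summf] unfolding sf .
  show "integral\<^sup>L lebesgue (\<lambda>y. indicator {0..<1/900} y *\<^sub>R (\<Sum>i. \<psi> (y + real_of_int (dec i) / 900))) = integral\<^sup>L lebesgue \<psi>"
    using integral_suminf[OF if_ aef summf] e1 unfolding sf by simp
qed

lemma null_transl:
  assumes "X \<in> null_sets lebesgue"
  shows "{y::real. y + s \<in> X} \<in> null_sets lebesgue"
proof -
  have "negligible X" using assms negligible_iff_null_sets by blast
  then have "negligible ((+) (- s) ` X)" by (rule negligible_translation)
  moreover have "(+) (- s) ` X = {y. y + s \<in> X}"
  proof
    show "(+) (- s) ` X \<subseteq> {y. y + s \<in> X}" by auto
    show "{y. y + s \<in> X} \<subseteq> (+) (- s) ` X"
    proof
      fix y assume "y \<in> {y. y + s \<in> X}"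
      then have "y + s \<in> X" by simp
      moreover have "y = - s + (y + s)" by simp
      ultimately show "y \<in> (+) (- s) ` X" by (rule rev_image_eqI)
    qed
  qed
  ultimately show ?thesis using negligible_iff_null_sets by metis
qed

lemma setA_iff:
  "x \<in> set_A \<longleftrightarrow> (\<exists>a\<in>AI. x = real_of_int a)"
proof -
  have S1: "(a::real) \<in> {0,36,72,108,144} \<longleftrightarrow> (\<exists>i\<in>{..<5::nat}. a = 36 * real i)" for a
    by (simp add: lessThan_nat_numeral) (auto)
  have S2: "(b::real) \<in> {0,100,200} \<longleftrightarrow> (\<exists>j\<in>{..<3::nat}. b = 100 * real j)" for b
    by (simp add: lessThan_nat_numeral) (auto)
  have S3: "(c::real) \<in> {0,225} \<longleftrightarrow> (\<exists>l\<in>{..<2::nat}. c = 225 * real l)" for c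
    by (simp add: lessThan_nat_numeral) (auto)
  have "x \<in> set_A \<longleftrightarrow> (\<exists>i\<in>{..<5::nat}. \<exists>j\<in>{..<3::nat}. \<exists>l\<in>{..<2::nat}. x = 36 * real i + 100 * real j + 225 * real l)"
    unfolding set_A_def mem_Collect_eq S1 S2 S3 by blast
  also have "\<dots> \<longleftrightarrow> (\<exists>a\<in>AI. x = real_of_int a)"
    unfolding AI_def Idx_def alpha_def by auto
  finally show ?thesis .
qed

definition tt :: "int \<Rightarrow> int \<Rightarrow> real" where "tt j a = real_of_int j + real_of_int a / 900"

lemma T_eq: "{of_int n + a / 900 | n a. a \<in> set_A} = {tt j a | j a. a \<in> AI}"
  unfolding tt_def setA_iff by auto

lemma tt_inj:
  assumes "a \<in> AI" "a' \<in> AI" "tt j a = tt j' a'"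
  shows "j = j' \<and> a = a'"
proof -
  have "real_of_int (900 * j + a) = real_of_int (900 * j' + a')"
    using assms(3) unfolding tt_def by (simp add: field_simps)
  then have e: "900 * j + a = 900 * j' + a'" by linarith
  have "0 \<le> a" "a \<le> 569" "0 \<le> a'" "a' \<le> 569" using AI_bounds assms(1,2) by auto
  then have "j = j'" using e by linarith
  then show ?thesis using e by simp
qed

definition EE :: "real set \<Rightarrow> real \<Rightarrow> int set" where
  "EE \<Omega> y = {n. y + real_of_int n / 900 \<in> \<Omega>}"

lemma tile_good:
  assumes til: "tiles_with \<Omega> {of_int n + a / 900 | n a. a \<in> set_A}"
  shows "AE y in lebesgue. good (EE \<Omega> y)"
proof -
  have cover: "\<exists>j. \<exists>a\<in>AI. z - tt j a \<in> \<Omega>" for z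
  proof -
    have "z \<in> (\<Union>t\<in>{tt j a | j a. a \<in> AI}. (\<lambda>x. x + t) ` \<Omega>)"
      using til unfolding tiles_with_def T_eq by simp
    then obtain t w where t: "t \<in> {tt j a | j a. a \<in> AI}" and w: "w \<in> \<Omega>" "z = w + t" by blast
    from t obtain j a where "t = tt j a" "a \<in> AI" by blast
    then show ?thesis using w by (intro exI[of _ j] bexI[of _ a]) auto
  qed
  define X where "X = (\<lambda>(j::int, a::int, j'::int, a'::int). (\<lambda>x. x + tt j a) ` \<Omega> \<inter> (\<lambda>x. x + tt j' a') ` \<Omega>)"
  define Q :: "(int \<times> int \<times> int \<times> int) set"
    where "Q = {(j, a, j', a') | j a j' a'. a \<in> AI \<and> a' \<in> AI \<and> (j, a) \<noteq> (j', a')}"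
  have Xnull: "X q \<in> null_sets lebesgue" if qQ: "q \<in> Q" for q
  proof -
    obtain j a j' a' where q: "q = (j, a, j', a')" "a \<in> AI" "a' \<in> AI" "(j, a) \<noteq> (j', a')"
      using qQ unfolding Q_def by blast
    have "tt j a \<noteq> tt j' a'" using tt_inj q by blast
    moreover have "tt j a \<in> {of_int n + a / 900 | n a. a \<in> set_A}" "tt j' a' \<in> {of_int n + a / 900 | n a. a \<in> set_A}"
      unfolding T_eq using q by auto
    ultimately show ?thesis using til unfolding tiles_with_def X_def q(1) by auto
  qed
  define Nset where "Nset = (\<Union>p\<in>(UNIV::int set) \<times> Q. {y. y + real_of_int (fst p) / 900 \<in> X (snd p)})"
  have "Nset \<in> null_sets lebesgue"
    unfolding Nset_def
  proof (rule null_sets_UN')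
    have "countable (UNIV :: (int \<times> int \<times> int \<times> int \<times> int) set)" by (rule countableI_type)
    then show "countable ((UNIV::int set) \<times> Q)" by (rule countable_subset[rotated]) simp
    fix p :: "int \<times> int \<times> int \<times> int \<times> int" assume "p \<in> UNIV \<times> Q"
    then show "{y. y + real_of_int (fst p) / 900 \<in> X (snd p)} \<in> null_sets lebesgue"
      using Xnull null_transl by auto
  qed
  then have "AE y in lebesgue. y \<notin> Nset" by (rule AE_not_in)
  then show ?thesis
  proof eventually_elim
    fix y assume yN: "y \<notin> Nset"
    show "good (EE \<Omega> y)" unfolding good_def
    proof (rule conjI; intro allI impI)
      fix m :: int
      obtain j a where ja: "a \<in> AI" "y + real_of_int m / 900 - tt j a \<in> \<Omega>" using cover by blast
      have eq: "y + real_of_int m / 900 - tt j a = y + real_of_int (m - a - 900 * j) / 900"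
        unfolding tt_def by (simp add: field_simps)
      have mem: "y + real_of_int (m - a - 900 * j) / 900 \<in> \<Omega>" using ja(2) unfolding eq .
      then have "m - a - 900 * j \<in> EE \<Omega> y" unfolding EE_def by (simp only: mem_Collect_eq)
      then show "\<exists>n\<in>EE \<Omega> y. \<exists>a\<in>AI. \<exists>j. m = n + a + 900 * j" using ja(1)
        by (intro bexI[of _ "m - a - 900 * j"] bexI[of _ a] exI[of _ j]) auto
    next
      fix n n' a a' j j'
      assume h: "n \<in> EE \<Omega> y" "n' \<in> EE \<Omega> y" "a \<in> AI" "a' \<in> AI" "n + a + 900 * j = n' + a' + 900 * j'"
      define m where "m = n + a + 900 * j"
      have z1: "y + real_of_int m / 900 - tt j a = y + real_of_int n / 900"
        unfolding m_def tt_def by (simp add: field_simps)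
      have z2: "y + real_of_int m / 900 - tt j' a' = y + real_of_int n' / 900"
        unfolding tt_def using h(5) unfolding m_def[symmetric] by (simp add: field_simps)
      have "(j, a) = (j', a')"
      proof (rule ccontr)
        assume ne: "(j, a) \<noteq> (j', a')"
        have o1: "y + real_of_int n / 900 \<in> \<Omega>" "y + real_of_int n' / 900 \<in> \<Omega>" using h(1,2) unfolding EE_def by auto
        have "y + real_of_int m / 900 = (y + real_of_int n / 900) + tt j a" using z1 by linarith
        then have "y + real_of_int m / 900 \<in> (\<lambda>x. x + tt j a) ` \<Omega>" using o1(1) by (rule rev_image_eqI[rotated])
        moreover have "y + real_of_int m / 900 = (y + real_of_int n' / 900) + tt j' a'" using z2 by linarith
        then have "y + real_of_int m / 900 \<in> (\<lambda>x. x + tt j' a') ` \<Omega>" using o1(2) by (rule rev_image_eqI[rotated])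
        ultimately have "y + real_of_int m / 900 \<in> X (j, a, j', a')" unfolding X_def by simp
        moreover have "(m, j, a, j', a') \<in> (UNIV::int set) \<times> Q" unfolding Q_def using h(3,4) ne by simp
        ultimately have "y \<in> Nset" unfolding Nset_def by force
        then show False using yN by simp
      qed
      then show "n = n' \<and> a = a'" using h(5) by simp
    qed
  qed
qed

lemma suminf_dec:
  fixes h :: "int \<Rightarrow> complex"
  assumes F: "finite F" and z: "\<And>n. n \<notin> F \<Longrightarrow> h n = 0"
  shows "(\<Sum>i. h (dec i)) = (\<Sum>n\<in>F. h n)"
proof -
  have fin: "finite (dec -` F)" using F by (rule finite_vimageI) (simp add: inj_int_decode)
  have "(\<Sum>i. h (dec i)) = (\<Sum>i\<in>dec -` F. h (dec i))"
    by (rule suminf_finite[OF fin]) (use z in auto)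
  also have "\<dots> = (\<Sum>n\<in>dec ` (dec -` F). h n)"
    using sum.reindex[of dec "dec -` F" h] inj_int_decode by (simp add: comp_def)
  also have "dec ` (dec -` F) = F" using surj_int_decode by (simp add: surj_image_vimage_eq)
  finally show ?thesis .
qed

lemma cis_split: "cis (2 * pi * real_of_int \<mu> * (y + real_of_int n / 900)) = cis (2 * pi * real_of_int \<mu> * y) * om (\<mu> * n)"
  unfolding om_def by (simp add: cis_mult[symmetric] algebra_simps)

lemma om_900_add: "om (900 * q * n + r) = om r"
proof -
  have "om (900 * q * n + r) = om (900 * (q * n)) * om r" by (simp add: om_add[symmetric] mult.assoc)
  then show ?thesis by (simp add: om_900)
qed

lemma cis_interval_zero:
  assumes q: "q \<noteq> 0"
  shows "integral\<^sup>L lebesgue (\<lambda>y. indicator {0..<1/900} y *\<^sub>R cis (2*pi*900*real_of_int q*y)) = 0"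
proof -
  define c where "c = 2*pi*900*real_of_int q"
  have c0: "c \<noteq> 0" using q unfolding c_def by simp
  define F where "F = (\<lambda>y. (- \<i> / complex_of_real c) * cis (c * y))"
  have der: "(F has_vector_derivative cis (c * y)) (at y within {0..1/900})" for y
    unfolding F_def has_vector_derivative_def
    by (auto intro!: derivative_eq_intros ext simp: c0 field_simps scaleR_conv_of_real)
  have "((\<lambda>y. cis (c * y)) has_integral (F (1/900) - F 0)) {0..1/900}"
    by (rule fundamental_theorem_of_calculus) (auto intro: der)
  moreover have "F (1/900) = F 0"
  proof -
    have e: "c * (1/900) = 2 * pi * real_of_int q" unfolding c_def by simp
    have "cis (2 * pi * real_of_int q) = 1" by (rule cis_multiple_2pi) simp
    then have "cis (c * (1/900)) = 1" unfolding e .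
    then show ?thesis unfolding F_def by simp
  qed
  ultimately have hi: "((\<lambda>y. cis (c * y)) has_integral 0) {0..1/900}" by simp
  have cm: "(\<lambda>y. cis (c * y)) \<in> borel_measurable lebesgue"
    by (rule cont_meas_lebesgue) (intro continuous_intros)
  have si: "set_integrable lebesgue {0..1/900} (\<lambda>y. cis (c * y))"
    unfolding set_integrable_def
  proof (rule Bochner_Integration.integrable_bound)
    show "integrable lebesgue (\<lambda>y. indicator {0..1/900::real} y :: real)"
      by (simp add: integrable_indicator_iff)
    show "(\<lambda>y. indicator {0..1/900} y *\<^sub>R cis (c * y)) \<in> borel_measurable lebesgue"
      using cm by (intro borel_measurable_scaleR borel_measurable_indicator) simp_all
    show "AE y in lebesgue. norm (indicator {0..1/900} y *\<^sub>R cis (c * y)) \<le> norm (indicator {0..1/900::real} y :: real)"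
      by (intro AE_I2) (simp add: indicator_def)
  qed
  have "((\<lambda>y. cis (c * y)) has_integral (LINT y:{0..1/900}|lebesgue. cis (c * y))) {0..1/900}"
    by (rule has_integral_set_lebesgue[OF si])
  then have z: "(LINT y:{0..1/900}|lebesgue. cis (c * y)) = 0"
    using hi has_integral_unique by blast
  have ae: "AE y in lebesgue. y \<noteq> 1/900" using AE_lborel_singleton by (rule AE_completion)
  have "integral\<^sup>L lebesgue (\<lambda>y. indicator {0..<1/900} y *\<^sub>R cis (c * y)) =
        integral\<^sup>L lebesgue (\<lambda>y. indicator {0..1/900} y *\<^sub>R cis (c * y))"
  proof (rule integral_cong_AE)
    show "(\<lambda>y. indicator {0..<1/900} y *\<^sub>R cis (c * y)) \<in> borel_measurable lebesgue"
      using cm by (intro borel_measurable_scaleR borel_measurable_indicator) simp_all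
    show "(\<lambda>y. indicator {0..1/900} y *\<^sub>R cis (c * y)) \<in> borel_measurable lebesgue"
      using cm by (intro borel_measurable_scaleR borel_measurable_indicator) simp_all
    show "AE y in lebesgue. indicator {0..<1/900} y *\<^sub>R cis (c * y) = indicator {0..1/900} y *\<^sub>R cis (c * y)"
      using ae by eventually_elim (auto simp: indicator_def)
  qed
  also have "\<dots> = 0" using z unfolding set_lebesgue_integral_def .
  finally show ?thesis unfolding c_def by (simp add: mult.assoc)
qed

lemma tiles_basic:
  assumes "tiles_with \<Omega> T"
  shows "\<Omega> \<in> sets lebesgue" "emeasure lebesgue \<Omega> < \<infinity>"
  using assms unfolding tiles_with_def by auto

lemma integrable_ind_bounded:
  fixes g :: "real \<Rightarrow> complex"
  assumes "\<Omega> \<in> sets lebesgue" "emeasure lebesgue \<Omega> < \<infinity>"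
    and "g \<in> borel_measurable lebesgue" and "\<And>x. norm (g x) \<le> 1"
  shows "integrable lebesgue (\<lambda>x. indicator \<Omega> x *\<^sub>R g x)"
proof (rule Bochner_Integration.integrable_bound)
  show "integrable lebesgue (\<lambda>x. indicator \<Omega> x :: real)"
    using assms(1,2) by (simp add: integrable_indicator_iff)
  show "(\<lambda>x. indicator \<Omega> x *\<^sub>R g x) \<in> borel_measurable lebesgue"
    using assms(1,3) by (intro borel_measurable_scaleR borel_measurable_indicator)
  show "AE x in lebesgue. norm (indicator \<Omega> x *\<^sub>R g x) \<le> norm (indicator \<Omega> x :: real)"
    using assms(4) by (intro AE_I2) (simp add: indicator_def)
qed

lemma ortho:
  assumes til: "tiles_with \<Omega> {of_int n + a / 900 | n a. a \<in> set_A}"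
    and a: "a \<in> AI" "a' \<in> AI" and ne: "900*k + a \<noteq> 900*k' + a'"
  shows "L2_inner \<Omega> (expo (real_of_int (900*k + a))) (expo (real_of_int (900*k' + a'))) = 0"
proof -
  have \<Omega>m: "\<Omega> \<in> sets lebesgue" and \<Omega>f: "emeasure lebesgue \<Omega> < \<infinity>" using tiles_basic[OF til] by auto
  define \<mu> where "\<mu> = (900*k + a) - (900*k' + a')"
  define \<psi> where "\<psi> = (\<lambda>x. indicator \<Omega> x *\<^sub>R cis (2*pi*real_of_int \<mu>*x))"
  have L: "L2_inner \<Omega> (expo (real_of_int (900*k + a))) (expo (real_of_int (900*k' + a'))) = integral\<^sup>L lebesgue \<psi>"
  proof -
    have "expo (real_of_int (900*k + a)) x * cnj (expo (real_of_int (900*k' + a')) x) = cis (2*pi*real_of_int \<mu>*x)" for x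
    proof -
      have "expo (real_of_int (900*k + a)) x * cnj (expo (real_of_int (900*k' + a')) x) =
            cis (2 * pi * real_of_int (900*k + a) * x + - (2 * pi * real_of_int (900*k' + a') * x))"
        unfolding expo_def by (simp only: cis_cnj cis_mult)
      also have "2 * pi * real_of_int (900*k + a) * x + - (2 * pi * real_of_int (900*k' + a') * x) = 2*pi*real_of_int \<mu>*x"
        unfolding \<mu>_def by (simp add: algebra_simps)
      finally show ?thesis .
    qed
    then show ?thesis unfolding L2_inner_def set_lebesgue_integral_def \<psi>_def by simp
  qed
  have cm: "(\<lambda>x. cis (2*pi*real_of_int \<mu>*x)) \<in> borel_measurable lebesgue"
    by (rule cont_meas_lebesgue) (intro continuous_intros)
  have i\<psi>: "integrable lebesgue \<psi>" unfolding \<psi>_def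
    using \<Omega>m \<Omega>f cm by (rule integrable_ind_bounded) simp
  have gd: "AE y in lebesgue. good (EE \<Omega> y)" by (rule tile_good[OF til])
  have fin: "AE y in lebesgue. finite {n::int. \<psi> (y + real_of_int n / 900) \<noteq> 0}"
    using gd
  proof eventually_elim
    fix y assume "good (EE \<Omega> y)"
    then have "finite (EE \<Omega> y)" by (rule good_finite)
    moreover have "{n::int. \<psi> (y + real_of_int n / 900) \<noteq> 0} \<subseteq> EE \<Omega> y"
      unfolding \<psi>_def EE_def by (auto simp: indicator_def)
    ultimately show "finite {n::int. \<psi> (y + real_of_int n / 900) \<noteq> 0}" by (rule finite_subset[rotated])
  qed
  define P\<psi> where "P\<psi> = (\<lambda>y. indicator {0..<1/900} y *\<^sub>R (\<Sum>i. \<psi> (y + real_of_int (dec i) / 900)))"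
  have iP: "integrable lebesgue P\<psi>" unfolding P\<psi>_def by (rule periodize(1)[OF i\<psi> fin])
  have eP: "integral\<^sup>L lebesgue P\<psi> = integral\<^sup>L lebesgue \<psi>" unfolding P\<psi>_def by (rule periodize(2)[OF i\<psi> fin])
  have pw: "(\<Sum>i. \<psi> (y + real_of_int (dec i) / 900)) = cis (2*pi*real_of_int \<mu>*y) * (\<Sum>n\<in>EE \<Omega> y. om ((a - a') * n))"
    if g: "good (EE \<Omega> y)" for y
  proof -
    have "(\<Sum>i. \<psi> (y + real_of_int (dec i) / 900)) = (\<Sum>n\<in>EE \<Omega> y. \<psi> (y + real_of_int n / 900))"
      by (rule suminf_dec[where h="\<lambda>n. \<psi> (y + real_of_int n / 900)"]) (use good_finite[OF g] in \<open>auto simp: \<psi>_def EE_def\<close>)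
    also have "\<dots> = (\<Sum>n\<in>EE \<Omega> y. cis (2*pi*real_of_int \<mu>*y) * om ((a - a') * n))"
    proof (rule sum.cong)
      fix n assume "n \<in> EE \<Omega> y"
      then have "\<psi> (y + real_of_int n / 900) = cis (2 * pi * real_of_int \<mu> * (y + real_of_int n / 900))"
        unfolding \<psi>_def EE_def by simp
      also have "\<dots> = cis (2*pi*real_of_int \<mu>*y) * om (\<mu> * n)" by (rule cis_split)
      also have "\<mu> * n = 900 * (k - k') * n + (a - a') * n" unfolding \<mu>_def by (simp add: algebra_simps)
      also have "om (900 * (k - k') * n + (a - a') * n) = om ((a - a') * n)" by (rule om_900_add)
      finally show "\<psi> (y + real_of_int n / 900) = cis (2*pi*real_of_int \<mu>*y) * om ((a - a') * n)" .
    qed simp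
    finally show ?thesis by (simp add: sum_distrib_left)
  qed
  show ?thesis
  proof (cases "a = a'")
    case False
    have "AE y in lebesgue. P\<psi> y = 0"
      using gd
    proof eventually_elim
      fix y assume g: "good (EE \<Omega> y)"
      show "P\<psi> y = 0" unfolding P\<psi>_def pw[OF g] good_Shat[OF g a False] by simp
    qed
    then have "integral\<^sup>L lebesgue P\<psi> = 0" by (rule integral_eq_zero_AE)
    then show ?thesis using L eP by simp
  next
    case True
    define q where "q = k - k'"
    have q0: "q \<noteq> 0" using ne True unfolding q_def by simp
    have \<mu>q: "real_of_int \<mu> = 900 * real_of_int q" unfolding \<mu>_def q_def True by simp
    have "AE y in lebesgue. P\<psi> y = 30 * (indicator {0..<1/900} y *\<^sub>R cis (2*pi*900*real_of_int q*y))"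
      using gd
    proof eventually_elim
      fix y assume g: "good (EE \<Omega> y)"
      have "(\<Sum>n\<in>EE \<Omega> y. om ((a - a') * n)) = 30" using good_card[OF g] True by simp
      then show "P\<psi> y = 30 * (indicator {0..<1/900} y *\<^sub>R cis (2*pi*900*real_of_int q*y))"
        unfolding P\<psi>_def pw[OF g] \<mu>q by (simp add: mult.assoc mult.commute mult.left_commute)
    qed
    then have "integral\<^sup>L lebesgue P\<psi> = integral\<^sup>L lebesgue (\<lambda>y. 30 * (indicator {0..<1/900} y *\<^sub>R cis (2*pi*900*real_of_int q*y)))"
    proof (rule integral_cong_AE[rotated 2])
      show "P\<psi> \<in> borel_measurable lebesgue" using iP by (rule borel_measurable_integrable)
      have "(\<lambda>y. cis (2*pi*900*real_of_int q*y)) \<in> borel_measurable lebesgue"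
        by (rule cont_meas_lebesgue) (intro continuous_intros)
      then show "(\<lambda>y. 30 * (indicator {0..<1/900} y *\<^sub>R cis (2*pi*900*real_of_int q*y))) \<in> borel_measurable lebesgue"
        by (intro borel_measurable_times borel_measurable_const borel_measurable_scaleR borel_measurable_indicator) simp_all
    qed
    also have "\<dots> = 30 * integral\<^sup>L lebesgue (\<lambda>y. indicator {0..<1/900} y *\<^sub>R cis (2*pi*900*real_of_int q*y))"
      by (rule integral_mult_right_zero)
    also have "\<dots> = 0" using cis_interval_zero[OF q0] by (simp only: mult_zero_right)
    finally show ?thesis using L eP by simp
  qed
qed

lemma Lam_iff: "x \<in> {900 * of_int k + a | k a. a \<in> set_A} \<longleftrightarrow> (\<exists>k. \<exists>a\<in>AI. x = real_of_int (900*k + a))"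
  unfolding setA_iff by auto

lemma ee_shift: "ee 900 k (y + real_of_int n / 900) = ee 900 k y"
proof -
  have e: "2 * pi * 900 * real_of_int k * (y + real_of_int n / 900) = 2*pi*900*real_of_int k*y + 2*pi*real_of_int (k*n)"
    by (simp add: algebra_simps)
  have "ee 900 k (y + real_of_int n / 900) = cis (2*pi*900*real_of_int k*y + 2*pi*real_of_int (k*n))"
    unfolding ee_def e ..
  also have "\<dots> = cis (2*pi*900*real_of_int k*y) * cis (2*pi*real_of_int (k*n))" by (rule cis_mult[symmetric])
  also have "cis (2*pi*real_of_int (k*n)) = 1" by (rule cis_multiple_2pi) simp
  finally show ?thesis unfolding ee_def by simp
qed

lemma complete:
  assumes til: "tiles_with \<Omega> {of_int n + a / 900 | n a. a \<in> set_A}"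
    and L2: "L2_on \<Omega> f"
    and orth: "\<forall>l\<in>{900 * of_int k + a | k a. a \<in> set_A}. L2_inner \<Omega> f (expo l) = 0"
  shows "AE x in lebesgue. x \<in> \<Omega> \<longrightarrow> f x = 0"
proof -
  have \<Omega>m: "\<Omega> \<in> sets lebesgue" and \<Omega>f: "emeasure lebesgue \<Omega> < \<infinity>" using tiles_basic[OF til] by auto
  define f\<Omega> where "f\<Omega> = (\<lambda>x. indicator \<Omega> x *\<^sub>R f x)"
  have fm: "f\<Omega> \<in> borel_measurable lebesgue"
    using L2 unfolding L2_on_def set_borel_measurable_def f\<Omega>_def by simp
  have if\<Omega>: "integrable lebesgue f\<Omega>"
  proof (rule Bochner_Integration.integrable_bound[OF _ fm])
    have "integrable lebesgue (\<lambda>x. indicator \<Omega> x :: real)"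
      using \<Omega>m \<Omega>f by (simp add: integrable_indicator_iff)
    moreover have "integrable lebesgue (\<lambda>x. indicator \<Omega> x *\<^sub>R (cmod (f x))\<^sup>2)"
      using L2 unfolding L2_on_def set_integrable_def by simp
    ultimately show "integrable lebesgue (\<lambda>x. indicator \<Omega> x + indicator \<Omega> x *\<^sub>R (cmod (f x))\<^sup>2)"
      by (rule Bochner_Integration.integrable_add)
    show "AE x in lebesgue. norm (f\<Omega> x) \<le> norm (indicator \<Omega> x + indicator \<Omega> x *\<^sub>R (cmod (f x))\<^sup>2)"
    proof (rule AE_I2)
      fix x
      have "cmod (f x) \<le> 1 + (cmod (f x))\<^sup>2"
      proof (cases "cmod (f x) \<le> 1")
        case True then show ?thesis by (simp add: add_increasing2)
      next
        case False
        then have "cmod (f x) * 1 \<le> cmod (f x) * cmod (f x)" by (intro mult_left_mono) auto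
        then show ?thesis by (simp add: power2_eq_square)
      qed
      then show "norm (f\<Omega> x) \<le> norm (indicator \<Omega> x + indicator \<Omega> x *\<^sub>R (cmod (f x))\<^sup>2)"
        unfolding f\<Omega>_def by (simp add: indicator_def)
    qed
  qed
  have gd: "AE y in lebesgue. good (EE \<Omega> y)" by (rule tile_good[OF til])
  define \<psi> where "\<psi> = (\<lambda>(a::int) x. f\<Omega> x * cis (- (2*pi*real_of_int a*x)))"
  have cmeas: "(\<lambda>x. cis (r * x)) \<in> borel_measurable lebesgue" for r
    by (rule cont_meas_lebesgue) (intro continuous_intros)
  have i\<psi>: "integrable lebesgue (\<psi> a)" for a
  proof (rule Bochner_Integration.integrable_bound[OF if\<Omega>])
    have "(\<lambda>x. cis ((- (2*pi*real_of_int a)) * x)) \<in> borel_measurable lebesgue" by (rule cmeas)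
    then show "\<psi> a \<in> borel_measurable lebesgue" unfolding \<psi>_def using fm
      by (simp add: borel_measurable_times)
    show "AE x in lebesgue. norm (\<psi> a x) \<le> norm (f\<Omega> x)" by (intro AE_I2) (simp add: \<psi>_def norm_mult)
  qed
  have supp\<Omega>: "\<And>x. x \<notin> \<Omega> \<Longrightarrow> f\<Omega> x = 0" unfolding f\<Omega>_def by simp
  have finS: "AE y in lebesgue. finite {n::int. g (y + real_of_int n / 900) \<noteq> 0}"
    if gz: "\<And>x. x \<notin> \<Omega> \<Longrightarrow> g x = 0" for g :: "real \<Rightarrow> complex"
    using gd
  proof eventually_elim
    fix y assume "good (EE \<Omega> y)"
    then have "finite (EE \<Omega> y)" by (rule good_finite)
    moreover have "{n::int. g (y + real_of_int n / 900) \<noteq> 0} \<subseteq> EE \<Omega> y"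
      unfolding EE_def using gz by auto
    ultimately show "finite {n::int. g (y + real_of_int n / 900) \<noteq> 0}" by (rule finite_subset[rotated])
  qed
  define H where "H = (\<lambda>a y. indicator {0..<1/900} y *\<^sub>R (\<Sum>i. \<psi> a (y + real_of_int (dec i) / 900)))"
  have fin\<psi>: "AE y in lebesgue. finite {n::int. \<psi> a (y + real_of_int n / 900) \<noteq> 0}" for a
    by (rule finS) (simp add: \<psi>_def supp\<Omega>)
  have iH: "integrable lebesgue (H a)" for a
    unfolding H_def by (rule periodize(1)[OF i\<psi> fin\<psi>])
  have H0: "AE y in lebesgue. H a y = 0" if a: "a \<in> AI" for a
  proof (rule fourier_unique[of 900])
    show "integrable lebesgue (H a)" by (rule iH)
    show "H a y = 0" if "y \<notin> {0..<1/900}" for y using that unfolding H_def by simp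
    fix k :: int
    define \<phi> where "\<phi> = (\<lambda>x. \<psi> a x * ee 900 k x)"
    have i\<phi>: "integrable lebesgue \<phi>"
    proof (rule Bochner_Integration.integrable_bound[OF i\<psi>[of a]])
      have "ee 900 k \<in> borel_measurable lebesgue" unfolding ee_def by (rule cont_meas_lebesgue) (intro continuous_intros)
      then show "\<phi> \<in> borel_measurable lebesgue" unfolding \<phi>_def
        using borel_measurable_integrable[OF i\<psi>[of a]] by (simp add: borel_measurable_times)
      show "AE x in lebesgue. norm (\<phi> x) \<le> norm (\<psi> a x)" by (intro AE_I2) (simp add: \<phi>_def norm_mult)
    qed
    have fin\<phi>: "AE y in lebesgue. finite {n::int. \<phi> (y + real_of_int n / 900) \<noteq> 0}"
      by (rule finS) (simp add: \<phi>_def \<psi>_def supp\<Omega>)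
    have "integral\<^sup>L lebesgue (\<lambda>y. H a y * ee 900 k y) =
          integral\<^sup>L lebesgue (\<lambda>y. indicator {0..<1/900} y *\<^sub>R (\<Sum>i. \<phi> (y + real_of_int (dec i) / 900)))"
    proof (rule integral_cong_AE)
      have "ee 900 k \<in> borel_measurable lebesgue" unfolding ee_def by (rule cont_meas_lebesgue) (intro continuous_intros)
      then show "(\<lambda>y. H a y * ee 900 k y) \<in> borel_measurable lebesgue"
        using borel_measurable_integrable[OF iH[of a]] by (simp add: borel_measurable_times)
      show "(\<lambda>y. indicator {0..<1/900} y *\<^sub>R (\<Sum>i. \<phi> (y + real_of_int (dec i) / 900))) \<in> borel_measurable lebesgue"
        using periodize(1)[OF i\<phi> fin\<phi>] by (rule borel_measurable_integrable)
      show "AE y in lebesgue. H a y * ee 900 k y = indicator {0..<1/900} y *\<^sub>R (\<Sum>i. \<phi> (y + real_of_int (dec i) / 900))"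
        using gd
      proof eventually_elim
        fix y assume g: "good (EE \<Omega> y)"
        have fE: "finite (EE \<Omega> y)" by (rule good_finite[OF g])
        have z1: "\<psi> a (y + real_of_int n / 900) = 0" if "n \<notin> EE \<Omega> y" for n
          using that unfolding EE_def \<psi>_def by (simp add: supp\<Omega>)
        have "(\<Sum>i. \<phi> (y + real_of_int (dec i) / 900)) = (\<Sum>n\<in>EE \<Omega> y. \<phi> (y + real_of_int n / 900))"
          by (rule suminf_dec[where h="\<lambda>n. \<phi> (y + real_of_int n / 900)", OF fE]) (simp add: \<phi>_def z1)
        also have "\<dots> = (\<Sum>n\<in>EE \<Omega> y. \<psi> a (y + real_of_int n / 900)) * ee 900 k y"
          unfolding \<phi>_def ee_shift by (simp add: sum_distrib_right)
        also have "(\<Sum>n\<in>EE \<Omega> y. \<psi> a (y + real_of_int n / 900)) = (\<Sum>i. \<psi> a (y + real_of_int (dec i) / 900))"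
          by (rule suminf_dec[where h="\<lambda>n. \<psi> a (y + real_of_int n / 900)", OF fE, symmetric]) (simp add: z1)
        finally show "H a y * ee 900 k y = indicator {0..<1/900} y *\<^sub>R (\<Sum>i. \<phi> (y + real_of_int (dec i) / 900))"
          unfolding H_def by (simp add: indicator_def)
      qed
    qed
    also have "\<dots> = integral\<^sup>L lebesgue \<phi>" by (rule periodize(2)[OF i\<phi> fin\<phi>])
    also have "\<dots> = L2_inner \<Omega> f (expo (real_of_int (900 * (- k) + a)))"
    proof -
      have "\<phi> x = indicator \<Omega> x *\<^sub>R (f x * cnj (expo (real_of_int (900 * (- k) + a)) x))" if "True" for x
      proof -
        have "cis (- (2 * pi * real_of_int a * x)) * ee 900 k x = cnj (expo (real_of_int (900 * (- k) + a)) x)"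
        proof -
          have "cis (- (2 * pi * real_of_int a * x)) * ee 900 k x = cis (- (2 * pi * real_of_int a * x) + 2 * pi * 900 * real_of_int k * x)"
            unfolding ee_def by (simp only: cis_mult)
          also have "- (2 * pi * real_of_int a * x) + 2 * pi * 900 * real_of_int k * x = - (2 * pi * real_of_int (900 * (- k) + a) * x)"
            by (simp add: algebra_simps)
          finally show ?thesis unfolding expo_def by (simp add: cis_cnj)
        qed
        then show ?thesis unfolding \<phi>_def \<psi>_def f\<Omega>_def by (simp add: mult.assoc)
      qed
      then have "\<phi> = (\<lambda>x. indicator \<Omega> x *\<^sub>R (f x * cnj (expo (real_of_int (900 * (- k) + a)) x)))" by auto
      then show ?thesis unfolding L2_inner_def set_lebesgue_integral_def by (simp only:)
    qed
    also have "\<dots> = 0"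
    proof -
      have "real_of_int (900 * (- k) + a) \<in> {900 * of_int k + a | k a. a \<in> set_A}" unfolding Lam_iff using a by blast
      then show ?thesis using orth by blast
    qed
    finally show "integral\<^sup>L lebesgue (\<lambda>y. H a y * ee 900 k y) = 0" .
  qed simp
  have "AE y in lebesgue. \<forall>a\<in>AI. H a y = 0"
    using H0 AI_finite by (simp add: eventually_ball_finite_distrib)
  then have P: "AE y in lebesgue. y \<in> {0..<1/900} \<longrightarrow> (\<forall>n\<in>EE \<Omega> y. f (y + real_of_int n / 900) = 0)"
    using gd
  proof eventually_elim
    fix y assume Hz: "\<forall>a\<in>AI. H a y = 0" and g: "good (EE \<Omega> y)"
    show "y \<in> {0..<1/900} \<longrightarrow> (\<forall>n\<in>EE \<Omega> y. f (y + real_of_int n / 900) = 0)"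
    proof (intro impI ballI)
      fix n assume y: "y \<in> {0..<1/900}" and nE: "n \<in> EE \<Omega> y"
      have fE: "finite (EE \<Omega> y)" by (rule good_finite[OF g])
      have "\<forall>a\<in>AI. (\<Sum>m\<in>EE \<Omega> y. f (y + real_of_int m / 900) * om (- a * m)) = 0"
      proof
        fix a assume a: "a \<in> AI"
        have z1: "\<psi> a (y + real_of_int m / 900) = 0" if "m \<notin> EE \<Omega> y" for m
          using that unfolding EE_def \<psi>_def by (simp add: supp\<Omega>)
        have "0 = H a y" using Hz a by simp
        also have "\<dots> = (\<Sum>i. \<psi> a (y + real_of_int (dec i) / 900))" unfolding H_def using y by simp
        also have "\<dots> = (\<Sum>m\<in>EE \<Omega> y. \<psi> a (y + real_of_int m / 900))"
          by (rule suminf_dec[where h="\<lambda>m. \<psi> a (y + real_of_int m / 900)", OF fE]) (simp add: z1)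
        also have "\<dots> = (\<Sum>m\<in>EE \<Omega> y. cis (2 * pi * real_of_int (- a) * y) * (f (y + real_of_int m / 900) * om (- a * m)))"
        proof (rule sum.cong)
          fix m assume "m \<in> EE \<Omega> y"
          then have "\<psi> a (y + real_of_int m / 900) = f (y + real_of_int m / 900) * cis (2 * pi * real_of_int (- a) * (y + real_of_int m / 900))"
            unfolding \<psi>_def f\<Omega>_def EE_def by simp
          also have "cis (2 * pi * real_of_int (- a) * (y + real_of_int m / 900)) = cis (2 * pi * real_of_int (- a) * y) * om (- a * m)"
            by (rule cis_split)
          finally show "\<psi> a (y + real_of_int m / 900) = cis (2 * pi * real_of_int (- a) * y) * (f (y + real_of_int m / 900) * om (- a * m))"
            by (simp add: mult_ac)
        qed simp
        also have "\<dots> = cis (2 * pi * real_of_int (- a) * y) * (\<Sum>m\<in>EE \<Omega> y. f (y + real_of_int m / 900) * om (- a * m))"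
          by (simp add: sum_distrib_left)
        finally show "(\<Sum>m\<in>EE \<Omega> y. f (y + real_of_int m / 900) * om (- a * m)) = 0"
          by simp
      qed
      then show "f (y + real_of_int n / 900) = 0"
        using good_complete[OF g _ nE, of "\<lambda>m. f (y + real_of_int m / 900)"] by simp
    qed
  qed
  then obtain N where N: "\<And>y. y \<in> space lebesgue - N \<Longrightarrow> y \<in> {0..<1/900} \<longrightarrow> (\<forall>n\<in>EE \<Omega> y. f (y + real_of_int n / 900) = 0)"
    and Nn: "N \<in> null_sets lebesgue" by (elim AE_E3) blast
  define Bad where "Bad = (\<Union>n::int. {x. x + (- real_of_int n / 900) \<in> N})"
  have "Bad \<in> null_sets lebesgue" unfolding Bad_def
    using null_transl[OF Nn] by (intro null_sets_UN) blast
  then have "AE x in lebesgue. x \<notin> Bad" by (rule AE_not_in)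
  then show ?thesis
  proof eventually_elim
    fix x assume xB: "x \<notin> Bad"
    show "x \<in> \<Omega> \<longrightarrow> f x = 0"
    proof
      assume x\<Omega>: "x \<in> \<Omega>"
      define n where "n = \<lfloor>900 * x\<rfloor>"
      define y where "y = x - real_of_int n / 900"
      have yx: "y + real_of_int n / 900 = x" unfolding y_def by simp
      have "y \<notin> N" using xB unfolding Bad_def y_def by auto
      then have "y \<in> space lebesgue - N" by simp
      moreover have "y \<in> {0..<1/900}"
      proof -
        have "x \<in> Iv n" unfolding n_def Iv_iff by simp
        then show ?thesis unfolding Iv_def y_def by auto
      qed
      moreover have "n \<in> EE \<Omega> y" unfolding EE_def mem_Collect_eq yx by (rule x\<Omega>)
      ultimately have "f (y + real_of_int n / 900) = 0" using N by blast
      then show "f x = 0" using yx by simp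
    qed
  qed
qed

theorem theorem4p1:
  shows "universal_spectrum {900 * of_int k + a | k a. a \<in> set_A}
                            {of_int n + a / 900 | n a. a \<in> set_A}"
  unfolding universal_spectrum_def
proof (intro allI impI)
  fix \<Omega> assume til: "tiles_with \<Omega> {of_int n + a / 900 | n a. a \<in> set_A}"
  show "spectral_with \<Omega> {900 * of_int k + a | k a. a \<in> set_A}"
    unfolding spectral_with_def
  proof (intro conjI)
    show "\<Omega> \<in> sets lebesgue" "0 < emeasure lebesgue \<Omega>" "emeasure lebesgue \<Omega> < \<infinity>"
      using til unfolding tiles_with_def by auto
    show "discrete_set {900 * of_int k + a | k a. a \<in> set_A}"
      unfolding discrete_set_def
    proof
      fix x assume "x \<in> {900 * of_int k + a | k a. a \<in> set_A}"
      then obtain k a where x: "x = real_of_int (900*k + a)" unfolding Lam_iff by blast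
      show "\<exists>e>0. \<forall>y\<in>{900 * of_int k + a | k a. a \<in> set_A}. dist y x < e \<longrightarrow> y = x"
      proof (intro exI[of _ 1] conjI ballI impI)
        fix y assume "y \<in> {900 * of_int k + a | k a. a \<in> set_A}" and d: "dist y x < 1"
        then obtain k' a' where y: "y = real_of_int (900*k' + a')" unfolding Lam_iff by blast
        have "\<bar>real_of_int (900*k' + a' - (900*k + a))\<bar> < 1" using d unfolding x y dist_real_def by simp
        then have "900*k' + a' - (900*k + a) = 0" by linarith
        then show "y = x" unfolding x y by simp
      qed simp
    qed
    show "\<forall>l\<in>{900 * of_int k + a | k a. a \<in> set_A}. \<forall>m\<in>{900 * of_int k + a | k a. a \<in> set_A}.
            l \<noteq> m \<longrightarrow> L2_inner \<Omega> (expo l) (expo m) = 0"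
    proof (intro ballI impI)
      fix l m assume "l \<in> {900 * of_int k + a | k a. a \<in> set_A}" "m \<in> {900 * of_int k + a | k a. a \<in> set_A}" "l \<noteq> m"
      then obtain k a k' a' where "a \<in> AI" "a' \<in> AI" "l = real_of_int (900*k + a)" "m = real_of_int (900*k' + a')"
        unfolding Lam_iff by blast
      moreover have "900*k + a \<noteq> 900*k' + a'" using \<open>l \<noteq> m\<close> calculation by auto
      ultimately show "L2_inner \<Omega> (expo l) (expo m) = 0" using ortho[OF til] by simp
    qed
    show "\<forall>f. L2_on \<Omega> f \<longrightarrow> (\<forall>l\<in>{900 * of_int k + a | k a. a \<in> set_A}. L2_inner \<Omega> f (expo l) = 0) \<longrightarrow>
          (AE x in lebesgue. x \<in> \<Omega> \<longrightarrow> f x = 0)"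
      using complete[OF til] by blast
  qed
qed

end
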